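(* Let $n\ge 2$ be an integer, let $\rho_{\text{in}}\in\mathbb{C}^{2^n\times 2^n}$ be an $n$-qubit density matrix, and let $\alpha(\rho_{\text{in}})=\text{Tr}[(\sigma_1\otimes I^{\otimes(n-1)})\rho_{\text{in}}]^2+\text{Tr}[(\sigma_3\otimes I^{\otimes(n-1)})\rho_{\text{in}}]^2$. (i) (Tree tensor.) If $n$ is a power of $2$, then the objective function $f_{\text{TT}}$ of the $n$-qubit TT-QNN satisfies $$\frac{1+\log_2 n}{2n}\,\alpha(\rho_{\text{in}})\;\le\;\mathbb{E}_{\boldsymbol{\theta}}\,\|\nabla_{\boldsymbol{\theta}} f_{\text{TT}}\|^2\;\le\;2n-1.$$ (ii) (Step controlled.) For every integer $n_c$ with $1\le n_c\le n-1$, the objective function $f_{\text{SC}}$ of the $n$-qubit SC-QNN with parameter $n_c$ satisfies $$\frac{1+n_c}{2^{1+n_c}}\,\alpha(\rho_{\text{in}})\;\le\;\mathbb{E}_{\boldsymbol{\theta}}\,\|\nabla_{\boldsymbol{\theta}} f_{\text{SC}}\|^2\;\le\;2n-1.$$ In both cases the expectation is over all $2n-1$ circuit parameters drawn independently and uniformly from $[0,2\pi]$, and $\nabla_{\boldsymbol\theta}$ is the gradient with respect to all of them.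
   Context: Pauli matrices: $\sigma_0=I$, $\sigma_1=X=\begin{pmatrix}0&1\\1&0\end{pmatrix}$, $\sigma_2=Y=\begin{pmatrix}0&-i\\i&0\end{pmatrix}$, $\sigma_3=Z=\begin{pmatrix}1&0\\0&-1\end{pmatrix}$. Qubits are numbered $1,\dots,n$. A rotation with parameter $\theta$ on qubit $q$ is the gate $e^{-i\theta\sigma_2}$ acting on qubit $q$ (identity elsewhere). A CNOT with control $c$ and target $t$ is $|0\rangle\langle 0|_c\otimes I_t+|1\rangle\langle1|_c\otimes (\sigma_1)_t$ (identity elsewhere). For a parameterized circuit unitary $V(\boldsymbol\theta)$ the objective is $f(\boldsymbol\theta)=\frac12+\frac12\text{Tr}[(\sigma_3\otimes I^{\otimes(n-1)})V(\boldsymbol\theta)\rho_{\text{in}}V(\boldsymbol\theta)^\dagger]$. TT-QNN ($n=2^m$): $V_{\text{TT}}=V_{m+1}CX_mV_m\cdots CX_1V_1$, where for $\ell=1,\dots,m+1$ the layer $V_\ell$ is the tensor product of independent-parameter rotations $e^{-i\theta_\ell^{(j)}\sigma_2}$ on qubits $(j-1)2^{\ell-1}+1$, $j=1,\dots,n2^{1-\ell}$; and for $\ell=1,\dots,m$ the layer $CX_\ell$ is the product of CNOTs with control qubit $(j-\tfrac12)2^\ell+1$ and target qubit $(j-1)2^\ell+1$, $j=1,\dots,n2^{-\ell}$. It has $2n-1$ parameters; $f_{\text{TT}}$ is $f$ with $V=V_{\text{TT}}$. SC-QNN with parameter $n_c$: $V_{\text{SC}}=V_nCX_{n-1}V_{n-1}\cdots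 CX_1V_1$, where $V_1$ applies an independent-parameter rotation to every qubit; for $2\le\ell\le n-n_c$, $V_\ell$ is a single rotation on qubit $n+1-\ell$; for $n-n_c+1\le \ell\le n$, $V_\ell$ is a single rotation on qubit $1$; for $1\le\ell\le n-1-n_c$, $CX_\ell$ is a CNOT with control qubit $n+1-\ell$ and target qubit $n-\ell$; for $n-n_c\le\ell\le n-1$, $CX_\ell$ is a CNOT with control qubit $n+1-\ell$ and target qubit $1$. Thus $n_c$ is the number of CNOTs targeting qubit 1 directly, and there are $2n-1$ parameters; $f_{\text{SC}}$ is $f$ with $V=V_{\text{SC}}$. *)

theory Defs
  imports "HOL-Probability.Probability"
begin

text \<open>An n-qubit operator is represented as a function nat => nat => complex whose
entries are only ever used for row/column indices below 2^n.  Basis index i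
encodes a computational-basis bit string; qubit q (1 \<le> q \<le> n) is the bit
(i div 2^(n-q)) mod 2, so qubit 1 is the leftmost tensor factor (most significant bit),
matching the convention sigma_3 \<otimes> I^(n-1) for an operator acting on qubit 1.\<close>

type_synonym cmat = "nat \<Rightarrow> nat \<Rightarrow> complex"

definition mmul :: "nat \<Rightarrow> cmat \<Rightarrow> cmat \<Rightarrow> cmat" where
  "mmul N A B = (\<lambda>i j. \<Sum>k<N. A i k * B k j)"

definition mid :: cmat where
  "mid = (\<lambda>i j. if i = j then 1 else 0)"

definition madj :: "cmat \<Rightarrow> cmat" where
  "madj A = (\<lambda>i j. cnj (A j i))"

definition mtrace :: "nat \<Rightarrow> cmat \<Rightarrow> complex" where
  "mtrace N A = (\<Sum>i<N. A i i)"

definition density_matrix :: "nat \<Rightarrow> cmat \<Rightarrow> bool" where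
  "density_matrix n \<rho> \<longleftrightarrow>
     (\<forall>i<2^n. \<forall>j<2^n. \<rho> i j = cnj (\<rho> j i)) \<and>
     (\<forall>v :: nat \<Rightarrow> complex. 0 \<le> Re (\<Sum>i<2^n. \<Sum>j<2^n. cnj (v i) * \<rho> i j * v j)) \<and>
     mtrace (2^n) \<rho> = 1"

definition qbit :: "nat \<Rightarrow> nat \<Rightarrow> nat \<Rightarrow> nat" where
  "qbit n q i = (i div 2^(n - q)) mod 2"

text \<open>Single-qubit 2x2 matrices (indices 0,1) and their lift to qubit q of n qubits,
i.e. I \<otimes> ... \<otimes> G \<otimes> ... \<otimes> I.\<close>
definition lift1 :: "nat \<Rightarrow> nat \<Rightarrow> cmat \<Rightarrow> cmat" where
  "lift1 n q G = (\<lambda>i j. if (\<forall>p\<in>{1..n} - {q}. qbit n p i = qbit n p j)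
                        then G (qbit n q i) (qbit n q j) else 0)"

definition pauliX :: cmat where
  "pauliX = (\<lambda>a b. if a \<noteq> b then 1 else 0)"

definition pauliY :: cmat where
  "pauliY = (\<lambda>a b. if a = 0 \<and> b = 1 then - \<i> else if a = 1 \<and> b = 0 then \<i> else 0)"

definition pauliZ :: cmat where
  "pauliZ = (\<lambda>a b. if a = b then (if a = 0 then 1 else -1) else 0)"

text \<open>The rotation e^{-i theta sigma_2} = cos theta I - i sin theta sigma_2
(exact closed form of the exponential, since sigma_2^2 = I).\<close>
definition rotY :: "real \<Rightarrow> cmat" where
  "rotY \<theta> = (\<lambda>a b. complex_of_real (cos \<theta>) * mid a b - \<i> * complex_of_real (sin \<theta>) * pauliY a b)"

text \<open>CNOT with control c and target t: the permutation matrix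
|0><0|_c \<otimes> I_t + |1><1|_c \<otimes> X_t.\<close>
definition cnot :: "nat \<Rightarrow> nat \<Rightarrow> nat \<Rightarrow> cmat" where
  "cnot n c t = (\<lambda>i j. if (\<forall>p\<in>{1..n} - {t}. qbit n p i = qbit n p j) \<and>
                          qbit n t i = (if qbit n c j = 1 then 1 - qbit n t j else qbit n t j)
                       then 1 else 0)"

datatype gate = Rot nat | CX nat nat

text \<open>Gates are listed in order of application; the k-th rotation gate in the list
(counting from 0) uses parameter theta k.\<close>
fun circ :: "nat \<Rightarrow> gate list \<Rightarrow> (nat \<Rightarrow> real) \<Rightarrow> nat \<Rightarrow> cmat" where
  "circ n [] \<theta> k = mid"
| "circ n (Rot q # gs) \<theta> k = mmul (2^n) (circ n gs \<theta> (Suc k)) (lift1 n q (rotY (\<theta> k)))"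
| "circ n (CX c t # gs) \<theta> k = mmul (2^n) (circ n gs \<theta> k) (cnot n c t)"

definition circuit_unitary :: "nat \<Rightarrow> gate list \<Rightarrow> (nat \<Rightarrow> real) \<Rightarrow> cmat" where
  "circuit_unitary n gs \<theta> = circ n gs \<theta> 0"

text \<open>Objective f(theta) = 1/2 + 1/2 Tr[(sigma_3 \<otimes> I) V rho V^dagger]
(the trace is real; we take its real part).\<close>
definition objective :: "nat \<Rightarrow> gate list \<Rightarrow> cmat \<Rightarrow> (nat \<Rightarrow> real) \<Rightarrow> real" where
  "objective n gs \<rho> \<theta> =
     (let V = circuit_unitary n gs \<theta> in
      1/2 + 1/2 * Re (mtrace (2^n) (mmul (2^n) (lift1 n 1 pauliZ)
                        (mmul (2^n) V (mmul (2^n) \<rho> (madj V))))))"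

definition grad_sq :: "nat \<Rightarrow> ((nat \<Rightarrow> real) \<Rightarrow> real) \<Rightarrow> (nat \<Rightarrow> real) \<Rightarrow> real" where
  "grad_sq P f \<theta> = (\<Sum>k<P. (deriv (\<lambda>t. f (\<theta>(k := t))) (\<theta> k))^2)"

definition expect_params :: "nat \<Rightarrow> ((nat \<Rightarrow> real) \<Rightarrow> real) \<Rightarrow> real" where
  "expect_params P g =
     integral\<^sup>L (PiM {..<P} (\<lambda>_. uniform_measure lborel {0..2*pi})) g"

text \<open>TT-QNN on n = 2^m qubits. Layer l (1..m+1): rotations on qubits j*2^(l-1)+1,
j < n/2^(l-1); for l \<le> m then CNOTs with control j*2^l + 2^(l-1) + 1 and target
j*2^l + 1, j < n/2^l (0-based j).\<close>
definition tt_gates :: "nat \<Rightarrow> gate list" where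
  "tt_gates m = (let n = 2^m in
     concat (map (\<lambda>l. map (\<lambda>j. Rot (j * 2^(l-1) + 1)) [0..<n div 2^(l-1)]
                      @ (if l \<le> m then map (\<lambda>j. CX (j * 2^l + 2^(l-1) + 1) (j * 2^l + 1)) [0..<n div 2^l]
                         else []))
                 [1..<m+2]))"

text \<open>SC-QNN on n qubits with parameter nc: V_1 (rotation on every qubit), then for
l = 1..n-1 the layer CX_l followed by V_(l+1).\<close>
definition sc_gates :: "nat \<Rightarrow> nat \<Rightarrow> gate list" where
  "sc_gates n nc =
     map (\<lambda>q. Rot q) [1..<n+1] @
     concat (map (\<lambda>l. [CX (n + 1 - l) (if l \<le> n - 1 - nc then n - l else 1),
                       Rot (if l + 1 \<le> n - nc then n - l else 1)])
                 [1..<n])"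

definition f_TT :: "nat \<Rightarrow> cmat \<Rightarrow> (nat \<Rightarrow> real) \<Rightarrow> real" where
  "f_TT m \<rho> = objective (2^m) (tt_gates m) \<rho>"

definition f_SC :: "nat \<Rightarrow> nat \<Rightarrow> cmat \<Rightarrow> (nat \<Rightarrow> real) \<Rightarrow> real" where
  "f_SC n nc \<rho> = objective n (sc_gates n nc) \<rho>"

definition alpha :: "nat \<Rightarrow> cmat \<Rightarrow> real" where
  "alpha n \<rho> = (Re (mtrace (2^n) (mmul (2^n) (lift1 n 1 pauliX) \<rho>)))^2
              + (Re (mtrace (2^n) (mmul (2^n) (lift1 n 1 pauliZ) \<rho>)))^2"

end

theory Submission
  imports Defs
begin

lemma mmul_assoc: "mmul N (mmul N A B) C = mmul N A (mmul N B C)"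
  unfolding mmul_def
  by (auto simp: sum_distrib_left sum_distrib_right mult.assoc intro!: ext sum.swap[THEN trans])

lemma madj_mmul: "madj (mmul N A B) = mmul N (madj B) (madj A)"
  unfolding mmul_def madj_def by (auto simp: mult.commute intro!: ext)

lemma mtrace_comm: "mtrace N (mmul N A B) = mtrace N (mmul N B A)"
  unfolding mtrace_def mmul_def by (subst sum.swap) (simp add: mult.commute)

lemma mmul_cong_entry:
  assumes "\<And>l. l < N \<Longrightarrow> A i l = A' i l" "\<And>l. l < N \<Longrightarrow> B l j = B' l j"
  shows "mmul N A B i j = mmul N A' B' i j"
  unfolding mmul_def using assms by (auto intro!: sum.cong)

lemma mmul_mid_left: assumes "i < N" shows "mmul N mid A i j = A i j"
proof -
  have "(\<Sum>k<N. mid i k * A k j) = (\<Sum>k<N. if i = k then A k j else 0)" by (rule sum.cong) (auto simp: mid_def)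
  then show ?thesis unfolding mmul_def using assms by (simp add: sum.delta')
qed

lemma mmul_mid_right: assumes "j < N" shows "mmul N A mid i j = A i j"
proof -
  have "(\<Sum>k<N. A i k * mid k j) = (\<Sum>k<N. if k = j then A i k else 0)" by (rule sum.cong) (auto simp: mid_def)
  then show ?thesis unfolding mmul_def using assms by (simp add: sum.delta)
qed

lemma mmul_lin_left:
  "mmul N (\<lambda>i j. x * A i j + y * B i j) C = (\<lambda>i j. x * mmul N A C i j + y * mmul N B C i j)"
  unfolding mmul_def by (auto simp: algebra_simps sum.distrib sum_distrib_left intro!: ext)

lemma mmul_lin_right:
  "mmul N C (\<lambda>i j. x * A i j + y * B i j) = (\<lambda>i j. x * mmul N C A i j + y * mmul N C B i j)"
  unfolding mmul_def by (auto simp: algebra_simps sum.distrib sum_distrib_left intro!: ext)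

lemma mmul_scale_left: "mmul N (\<lambda>i j. x * A i j) C = (\<lambda>i j. x * mmul N A C i j)"
  unfolding mmul_def by (auto simp: algebra_simps sum_distrib_left intro!: ext)

lemma mmul_scale_right: "mmul N C (\<lambda>i j. x * A i j) = (\<lambda>i j. x * mmul N C A i j)"
  unfolding mmul_def by (auto simp: algebra_simps sum_distrib_left intro!: ext)

lemma mmul_sum_right: "mmul N C (\<lambda>i j. \<Sum>s\<in>S. f s i j) = (\<lambda>i j. \<Sum>s\<in>S. mmul N C (f s) i j)"
  unfolding mmul_def by (auto simp: sum_distrib_left intro!: ext sum.swap[THEN trans])

lemma mmul_sum_left: "mmul N (\<lambda>i j. \<Sum>s\<in>S. f s i j) C = (\<lambda>i j. \<Sum>s\<in>S. mmul N (f s) C i j)"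
  unfolding mmul_def by (auto simp: sum_distrib_right intro!: ext sum.swap[THEN trans])

lemma qbit_bit: "qbit n q i = (if bit i (n - q) then 1 else 0)"
  unfolding qbit_def by (simp add: bit_iff_odd odd_iff_mod_2_eq_one)

lemma qbit_less2: "qbit n q i < 2"
  unfolding qbit_def by simp

lemma bit_ge_false: "(i::nat) < 2^n \<Longrightarrow> n \<le> k \<Longrightarrow> \<not> bit i k"
  by (metis bit_take_bit_iff take_bit_nat_eq_self_iff not_le)

lemma bits_eq:
  assumes "i < 2^n" "j < 2^n" "\<forall>p\<in>{1..n}. qbit n p i = qbit n p j"
  shows "i = j"
proof -
  have "bit i k = bit j k" for k
  proof (cases "k < n")
    case True
    then have "n - k \<in> {1..n}" by auto
    with assms(3) have "qbit n (n - k) i = qbit n (n - k) j" by blast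
    moreover have "n - (n - k) = k" using True by simp
    ultimately show ?thesis by (simp add: qbit_bit split: if_splits)
  next
    case False
    then show ?thesis using bit_ge_false assms(1,2) by simp
  qed
  then show ?thesis by (simp add: bit_eq_iff)
qed

definition setq :: "nat \<Rightarrow> nat \<Rightarrow> nat \<Rightarrow> nat \<Rightarrow> nat" where
  "setq n q i b = (if b = 0 then unset_bit (n - q) i else set_bit (n - q) i)"

lemma less_pow2_iff_bits: "(i::nat) < 2^n \<longleftrightarrow> (\<forall>k\<ge>n. \<not> bit i k)"
  by (metis bit_ge_false bit_take_bit_iff bit_eq_iff take_bit_nat_less_exp not_le)

lemma setq_less: "q \<in> {1..n} \<Longrightarrow> i < 2^n \<Longrightarrow> setq n q i b < 2^n"
  unfolding setq_def less_pow2_iff_bits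
  by (auto simp: bit_set_bit_iff bit_unset_bit_iff)

lemma qbit_setq: "q \<in> {1..n} \<Longrightarrow> p \<in> {1..n} \<Longrightarrow> b < 2 \<Longrightarrow>
   qbit n p (setq n q i b) = (if p = q then b else qbit n p i)"
  unfolding setq_def qbit_bit
  by (auto simp: bit_set_bit_iff bit_unset_bit_iff)

lemma sumq:
  fixes g :: "nat \<Rightarrow> 'a::comm_monoid_add"
  assumes q: "q \<in> {1..n}" and i: "i < 2^n"
  shows "(\<Sum>l<2^n. if (\<forall>p\<in>{1..n} - {q}. qbit n p i = qbit n p l) then g l else 0)
         = g (setq n q i 0) + g (setq n q i 1)"
proof -
  let ?S = "{l. l < 2^n \<and> (\<forall>p\<in>{1..n} - {q}. qbit n p i = qbit n p l)}"
  have S: "?S = {setq n q i 0, setq n q i 1}"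
  proof (intro equalityI subsetI)
    fix l assume l: "l \<in> ?S"
    have "qbit n q l < 2" by (rule qbit_less2)
    then have "qbit n q l = 0 \<or> qbit n q l = 1" by auto
    then show "l \<in> {setq n q i 0, setq n q i 1}"
    proof
      assume h: "qbit n q l = 0"
      have "setq n q i 0 = l"
        by (rule bits_eq[OF setq_less[OF q i]]) (use l h q in \<open>auto simp: qbit_setq\<close>)
      then show ?thesis by simp
    next
      assume h: "qbit n q l = 1"
      have "setq n q i 1 = l"
        by (rule bits_eq[OF setq_less[OF q i]]) (use l h q in \<open>auto simp: qbit_setq\<close>)
      then show ?thesis by simp
    qed
  next
    fix l assume "l \<in> {setq n q i 0, setq n q i 1}"
    then show "l \<in> ?S" using q i by (auto simp: setq_less qbit_setq split: if_splits)
  qed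
  have ne: "setq n q i 0 \<noteq> setq n q i 1"
    using qbit_setq[OF q q, of 0 i] qbit_setq[OF q q, of 1 i] by auto
  have "(\<Sum>l<2^n. if (\<forall>p\<in>{1..n} - {q}. qbit n p i = qbit n p l) then g l else 0) = sum g ?S"
    by (simp add: sum.inter_restrict lessThan_def Collect_conj_eq)
  also have "\<dots> = g (setq n q i 0) + g (setq n q i 1)" using S ne by simp
  finally show ?thesis .
qed

section \<open>Lifted single-qubit operators\<close>

lemma lift1_lin:
  "lift1 n q (\<lambda>a b. x * A a b + y * B a b) = (\<lambda>i j. x * lift1 n q A i j + y * lift1 n q B i j)"
  unfolding lift1_def by (auto intro!: ext)

lemma lift1_cong2: "(\<And>a b. a < 2 \<Longrightarrow> b < 2 \<Longrightarrow> A a b = B a b) \<Longrightarrow> lift1 n q A = lift1 n q B"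
  unfolding lift1_def by (auto intro!: ext simp: qbit_less2)

lemma madj_lift1: "madj (lift1 n q A) = lift1 n q (madj A)"
  unfolding lift1_def madj_def by (auto intro!: ext)

lemma lift1_setq:
  assumes "q \<in> {1..n}" "b < 2"
  shows "lift1 n q B (setq n q i b) j = (if (\<forall>p\<in>{1..n} - {q}. qbit n p i = qbit n p j) then B b (qbit n q j) else 0)"
  using assms unfolding lift1_def by (auto simp: qbit_setq)

lemma lift1_mul:
  assumes q: "q \<in> {1..n}" and i: "i < 2^n" and j: "j < 2^n"
  shows "mmul (2^n) (lift1 n q A) (lift1 n q B) i j = lift1 n q (mmul 2 A B) i j"
proof -
  have "mmul (2^n) (lift1 n q A) (lift1 n q B) i j =
     (\<Sum>l<2^n. if (\<forall>p\<in>{1..n}-{q}. qbit n p i = qbit n p l) then A (qbit n q i) (qbit n q l) * lift1 n q B l j else 0)"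
    unfolding mmul_def by (rule sum.cong) (auto simp: lift1_def)
  also have "\<dots> = A (qbit n q i) (qbit n q (setq n q i 0)) * lift1 n q B (setq n q i 0) j
                 + A (qbit n q i) (qbit n q (setq n q i 1)) * lift1 n q B (setq n q i 1) j"
    by (rule sumq[OF q i])
  also have "\<dots> = lift1 n q (mmul 2 A B) i j"
    using q by (simp add: lift1_setq qbit_setq lift1_def mmul_def numeral_2_eq_2)
  finally show ?thesis .
qed

lemma cond_setq:
  assumes p: "p \<in> {1..n}" and q: "q \<in> {1..n}" and pq: "p \<noteq> q" and b: "b < 2"
  shows "(\<forall>r\<in>{1..n}-{q}. qbit n r (setq n p i b) = qbit n r j) \<longleftrightarrow>
         (b = qbit n p j \<and> (\<forall>r\<in>{1..n}-{p,q}. qbit n r i = qbit n r j))"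
proof
  assume h: "\<forall>r\<in>{1..n}-{q}. qbit n r (setq n p i b) = qbit n r j"
  have "qbit n p (setq n p i b) = qbit n p j" using h p pq by auto
  then have "b = qbit n p j" using qbit_setq[OF p p b] by simp
  moreover have "\<forall>r\<in>{1..n}-{p,q}. qbit n r i = qbit n r j"
  proof
    fix r assume r: "r \<in> {1..n}-{p,q}"
    then have "qbit n r (setq n p i b) = qbit n r j" using h by auto
    then show "qbit n r i = qbit n r j" using qbit_setq[OF p _ b, of r i] r by auto
  qed
  ultimately show "b = qbit n p j \<and> (\<forall>r\<in>{1..n}-{p,q}. qbit n r i = qbit n r j)" by blast
next
  assume "b = qbit n p j \<and> (\<forall>r\<in>{1..n}-{p,q}. qbit n r i = qbit n r j)"
  then show "\<forall>r\<in>{1..n}-{q}. qbit n r (setq n p i b) = qbit n r j"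
    using qbit_setq[OF p _ b] by auto
qed

lemma lift1_comm_formula:
  assumes p: "p \<in> {1..n}" and q: "q \<in> {1..n}" and pq: "p \<noteq> q" and i: "i < 2^n" and j: "j < 2^n"
  shows "mmul (2^n) (lift1 n p A) (lift1 n q B) i j =
    (if (\<forall>r\<in>{1..n}-{p,q}. qbit n r i = qbit n r j) then A (qbit n p i) (qbit n p j) * B (qbit n q i) (qbit n q j) else 0)"
proof -
  have "mmul (2^n) (lift1 n p A) (lift1 n q B) i j =
     (\<Sum>l<2^n. if (\<forall>r\<in>{1..n}-{p}. qbit n r i = qbit n r l) then A (qbit n p i) (qbit n p l) * lift1 n q B l j else 0)"
    unfolding mmul_def by (rule sum.cong) (auto simp: lift1_def)
  also have "\<dots> = A (qbit n p i) (qbit n p (setq n p i 0)) * lift1 n q B (setq n p i 0) j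
                 + A (qbit n p i) (qbit n p (setq n p i 1)) * lift1 n q B (setq n p i 1) j"
    by (rule sumq[OF p i])
  also have "\<dots> = (if (\<forall>r\<in>{1..n}-{p,q}. qbit n r i = qbit n r j) then A (qbit n p i) (qbit n p j) * B (qbit n q i) (qbit n q j) else 0)"
  proof -
    have qq: "qbit n q (setq n p i b) = qbit n q i" if "b < 2" for b
      using qbit_setq[OF p q that] pq by simp
    have L: "lift1 n q B (setq n p i b) j = (if b = qbit n p j \<and> (\<forall>r\<in>{1..n}-{p,q}. qbit n r i = qbit n r j)
              then B (qbit n q i) (qbit n q j) else 0)" if "b < 2" for b
    proof -
      have "lift1 n q B (setq n p i b) j = (if (\<forall>r\<in>{1..n}-{q}. qbit n r (setq n p i b) = qbit n r j)
             then B (qbit n q (setq n p i b)) (qbit n q j) else 0)" by (simp add: lift1_def)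
      then show ?thesis by (simp only: cond_setq[OF p q pq that] qq[OF that])
    qed
    have "qbit n p j < 2" by (rule qbit_less2)
    then have "qbit n p j = 0 \<or> qbit n p j = 1" by auto
    then show ?thesis using L[of 0] L[of 1] qbit_setq[OF p p, of 0 i] qbit_setq[OF p p, of 1 i] by auto
  qed
  finally show ?thesis .
qed

lemma lift1_comm:
  assumes p: "p \<in> {1..n}" and q: "q \<in> {1..n}" and pq: "p \<noteq> q" and i: "i < 2^n" and j: "j < 2^n"
  shows "mmul (2^n) (lift1 n p A) (lift1 n q B) i j = mmul (2^n) (lift1 n q B) (lift1 n p A) i j"
  using lift1_comm_formula[OF p q pq i j, of A B] lift1_comm_formula[OF q p pq[symmetric] i j, of B A]
  by (simp add: insert_commute mult.commute)

lemma lift1_mid: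
  assumes q: "q \<in> {1..n}" and i: "i < 2^n" and j: "j < 2^n"
  shows "lift1 n q mid i j = mid i j"
proof (cases "i = j")
  case True then show ?thesis by (simp add: lift1_def mid_def)
next
  case False
  have "qbit n q i \<noteq> qbit n q j" if "\<forall>p\<in>{1..n} - {q}. qbit n p i = qbit n p j"
  proof
    assume "qbit n q i = qbit n q j"
    with that have "\<forall>p\<in>{1..n}. qbit n p i = qbit n p j" by auto
    then show False using bits_eq[OF i j] False by blast
  qed
  then show ?thesis using False by (auto simp: lift1_def mid_def)
qed

lemma lift1_diag:
  assumes q: "q \<in> {1..n}" and i: "i < 2^n" and j: "j < 2^n" and D: "\<And>a b. a \<noteq> b \<Longrightarrow> D a b = 0"
  shows "lift1 n q D i j = (if i = j then D (qbit n q i) (qbit n q i) else 0)"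
proof (cases "i = j")
  case True then show ?thesis by (simp add: lift1_def)
next
  case False
  have "qbit n q i \<noteq> qbit n q j" if "\<forall>p\<in>{1..n} - {q}. qbit n p i = qbit n p j"
  proof
    assume "qbit n q i = qbit n q j"
    with that have "\<forall>p\<in>{1..n}. qbit n p i = qbit n p j" by auto
    then show False using bits_eq[OF i j] False by blast
  qed
  then show ?thesis using False D by (auto simp: lift1_def)
qed

section \<open>CNOT as a permutation\<close>

definition cperm :: "nat \<Rightarrow> nat \<Rightarrow> nat \<Rightarrow> nat \<Rightarrow> nat" where
  "cperm n c t j = (if qbit n c j = 1 then setq n t j (1 - qbit n t j) else j)"

lemma cperm_less: "t \<in> {1..n} \<Longrightarrow> j < 2^n \<Longrightarrow> cperm n c t j < 2^n"
  unfolding cperm_def by (simp add: setq_less)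

lemma qbit_cperm:
  assumes "t \<in> {1..n}" "p \<in> {1..n}"
  shows "qbit n p (cperm n c t j) = (if p = t \<and> qbit n c j = 1 then 1 - qbit n t j else qbit n p j)"
  using assms unfolding cperm_def by (auto simp: qbit_setq)

lemma cnot_eq:
  assumes c: "c \<in> {1..n}" and t: "t \<in> {1..n}" and ct: "c \<noteq> t" and l: "l < 2^n" and j: "j < 2^n"
  shows "cnot n c t l j = (if l = cperm n c t j then 1 else 0)"
proof (cases "l = cperm n c t j")
  case True
  then show ?thesis using t unfolding cnot_def by (auto simp: qbit_cperm)
next
  case False
  have "\<not> ((\<forall>p\<in>{1..n} - {t}. qbit n p l = qbit n p j) \<and>
           qbit n t l = (if qbit n c j = 1 then 1 - qbit n t j else qbit n t j))"
  proof
    assume h: "(\<forall>p\<in>{1..n} - {t}. qbit n p l = qbit n p j) \<and>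
           qbit n t l = (if qbit n c j = 1 then 1 - qbit n t j else qbit n t j)"
    have "l = cperm n c t j"
      by (rule bits_eq[OF l cperm_less[OF t j]]) (use h t in \<open>auto simp: qbit_cperm\<close>)
    with False show False by simp
  qed
  then show ?thesis using False unfolding cnot_def by auto
qed

lemma cperm_invol:
  assumes c: "c \<in> {1..n}" and t: "t \<in> {1..n}" and ct: "c \<noteq> t" and j: "j < 2^n"
  shows "cperm n c t (cperm n c t j) = j"
proof (rule bits_eq[OF cperm_less[OF t cperm_less[OF t j]] j], intro ballI)
  fix p assume p: "p \<in> {1..n}"
  have cc: "qbit n c (cperm n c t j) = qbit n c j" using qbit_cperm[OF t c] ct by simp
  have "qbit n t j < 2" by (rule qbit_less2)
  then show "qbit n p (cperm n c t (cperm n c t j)) = qbit n p j"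
    using qbit_cperm[OF t p, of c "cperm n c t j"] qbit_cperm[OF t p, of c j] qbit_cperm[OF t t, of c j] cc
    by auto
qed

lemma cnot_mul_right:
  assumes c: "c \<in> {1..n}" and t: "t \<in> {1..n}" and ct: "c \<noteq> t" and j: "j < 2^n"
  shows "mmul (2^n) X (cnot n c t) l j = X l (cperm n c t j)"
proof -
  have "mmul (2^n) X (cnot n c t) l j = (\<Sum>l'<2^n. if l' = cperm n c t j then X l l' else 0)"
    unfolding mmul_def
  proof (rule sum.cong)
    fix x :: nat assume "x \<in> {..<2^n}"
    then show "X l x * cnot n c t x j = (if x = cperm n c t j then X l x else 0)"
      using cnot_eq[OF c t ct _ j, of x] by simp
  qed simp
  then show ?thesis using cperm_less[OF t j] by simp
qed

lemma cnot_mul_left: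
  assumes c: "c \<in> {1..n}" and t: "t \<in> {1..n}" and ct: "c \<noteq> t" and i: "i < 2^n"
  shows "mmul (2^n) (madj (cnot n c t)) Y i j = Y (cperm n c t i) j"
proof -
  have "mmul (2^n) (madj (cnot n c t)) Y i j = (\<Sum>l<2^n. if l = cperm n c t i then Y l j else 0)"
    unfolding mmul_def
  proof (rule sum.cong)
    fix x :: nat assume "x \<in> {..<2^n}"
    then show "madj (cnot n c t) i x * Y x j = (if x = cperm n c t i then Y x j else 0)"
      using cnot_eq[OF c t ct _ i, of x] by (simp add: madj_def)
  qed simp
  then show ?thesis using cperm_less[OF t i] by simp
qed

lemma cnot_conj:
  assumes c: "c \<in> {1..n}" and t: "t \<in> {1..n}" and ct: "c \<noteq> t" and i: "i < 2^n" and j: "j < 2^n"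
  shows "mmul (2^n) (madj (cnot n c t)) (mmul (2^n) X (cnot n c t)) i j = X (cperm n c t i) (cperm n c t j)"
  by (subst cnot_mul_left[OF c t ct i]) (rule cnot_mul_right[OF c t ct j])

lemma cnot_unitary:
  assumes c: "c \<in> {1..n}" and t: "t \<in> {1..n}" and ct: "c \<noteq> t" and i: "i < 2^n" and j: "j < 2^n"
  shows "mmul (2^n) (madj (cnot n c t)) (cnot n c t) i j = mid i j"
proof -
  have "mmul (2^n) (madj (cnot n c t)) (cnot n c t) i j = cnot n c t (cperm n c t i) j"
    by (rule cnot_mul_left[OF c t ct i])
  also have "\<dots> = (if cperm n c t i = cperm n c t j then 1 else 0)"
    by (rule cnot_eq[OF c t ct cperm_less[OF t i] j])
  also have "\<dots> = mid i j"
  proof -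
    have "cperm n c t i = cperm n c t j \<longleftrightarrow> i = j"
      by (metis cperm_invol[OF c t ct i] cperm_invol[OF c t ct j])
    then show ?thesis by (simp add: mid_def)
  qed
  finally show ?thesis .
qed

lemma lift1_cperm:
  assumes c: "c \<in> {1..n}" and t: "t \<in> {1..n}" and ct: "c \<noteq> t" and c1: "c \<noteq> 1"
    and i: "i < 2^n" and j: "j < 2^n" and n1: "1 \<le> n"
    and A: "t = 1 \<Longrightarrow> (\<forall>a<2. \<forall>b<2. A (1 - a) (1 - b) = A a b)"
  shows "lift1 n 1 A (cperm n c t i) (cperm n c t j) = lift1 n 1 A i j"
proof -
  have one: "1 \<in> {1..n}" using n1 by simp
  have ci: "qbit n c (cperm n c t i) = qbit n c i" and cj: "qbit n c (cperm n c t j) = qbit n c j"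
    using qbit_cperm[OF t c] ct by auto
  have cond: "(\<forall>p\<in>{1..n} - {1}. qbit n p (cperm n c t i) = qbit n p (cperm n c t j)) \<longleftrightarrow>
              (\<forall>p\<in>{1..n} - {1}. qbit n p i = qbit n p j)"
  proof
    assume h: "\<forall>p\<in>{1..n} - {1}. qbit n p (cperm n c t i) = qbit n p (cperm n c t j)"
    have "qbit n c i = qbit n c j" using h c c1 ci cj by force
    show "\<forall>p\<in>{1..n} - {1}. qbit n p i = qbit n p j"
    proof
      fix p assume p: "p \<in> {1..n} - {1}"
      then have e: "qbit n p (cperm n c t i) = qbit n p (cperm n c t j)" using h by blast
      have pp: "p \<in> {1..n}" using p by simp
      show "qbit n p i = qbit n p j"
      proof (cases "p = t \<and> qbit n c i = 1")
        case True
        then have "1 - qbit n t i = 1 - qbit n t j"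
          using e qbit_cperm[OF t pp, of c i] qbit_cperm[OF t pp, of c j] \<open>qbit n c i = qbit n c j\<close> by simp
        then show ?thesis using True qbit_less2[of n t i] qbit_less2[of n t j] by simp
      next
        case False
        then show ?thesis
          using e qbit_cperm[OF t pp, of c i] qbit_cperm[OF t pp, of c j] \<open>qbit n c i = qbit n c j\<close> by auto
      qed
    qed
  next
    assume h: "\<forall>p\<in>{1..n} - {1}. qbit n p i = qbit n p j"
    have "qbit n c i = qbit n c j" using h c c1 by force
    then show "\<forall>p\<in>{1..n} - {1}. qbit n p (cperm n c t i) = qbit n p (cperm n c t j)"
      using h qbit_cperm[OF t, of _ c i] qbit_cperm[OF t, of _ c j] by auto
  qed
  show ?thesis
  proof (cases "\<forall>p\<in>{1..n} - {1}. qbit n p i = qbit n p j")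
    case False
    have l1: "lift1 n 1 A x y = (if (\<forall>p\<in>{1..n}-{1}. qbit n p x = qbit n p y) then A (qbit n 1 x) (qbit n 1 y) else 0)" for x y
      by (simp add: lift1_def)
    show ?thesis by (simp only: l1 cond if_not_P[OF False])
  next
    case True
    have "qbit n c i = qbit n c j" using True c c1 by force
    have "A (qbit n 1 (cperm n c t i)) (qbit n 1 (cperm n c t j)) = A (qbit n 1 i) (qbit n 1 j)"
    proof (cases "t = 1")
      case True
      then show ?thesis using A qbit_cperm[OF t one, of c i] qbit_cperm[OF t one, of c j]
        \<open>qbit n c i = qbit n c j\<close> qbit_less2[of n 1 i] qbit_less2[of n 1 j] by auto
    next
      case False
      then show ?thesis using qbit_cperm[OF t one, of c i] qbit_cperm[OF t one, of c j] by auto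
    qed
    then show ?thesis using True cond by (simp add: lift1_def)
  qed
qed

section \<open>Rotations\<close>

definition Jm :: cmat where
  "Jm = (\<lambda>a b. if a = 0 \<and> b = 1 then -1 else if a = 1 \<and> b = 0 then 1 else 0)"

lemma ii_mult: "\<i> * x * \<i> = - (x::complex)"
  by (metis complex_i_mult_minus mult.commute mult.assoc)

lemma rotY_eq: "rotY \<theta> = (\<lambda>a b. complex_of_real (cos \<theta>) * mid a b + complex_of_real (sin \<theta>) * Jm a b)"
  unfolding rotY_def Jm_def pauliY_def by (auto intro!: ext simp: ii_mult)

lemma madj_mid: "madj mid = mid"
  unfolding madj_def mid_def by (auto intro!: ext)

lemma madj_rotY: "madj (rotY \<theta>) = (\<lambda>a b. complex_of_real (cos \<theta>) * mid a b + complex_of_real (sin \<theta>) * madj Jm a b)"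
  unfolding rotY_eq madj_def mid_def by (auto intro!: ext)

lemma lift1_rot: "lift1 n q (rotY \<theta>) = (\<lambda>i j. complex_of_real (cos \<theta>) * lift1 n q mid i j + complex_of_real (sin \<theta>) * lift1 n q Jm i j)"
  unfolding rotY_eq by (rule lift1_lin)

lemma madj_lift1_rot: "madj (lift1 n q (rotY \<theta>)) = (\<lambda>i j. complex_of_real (cos \<theta>) * lift1 n q mid i j + complex_of_real (sin \<theta>) * lift1 n q (madj Jm) i j)"
  unfolding madj_lift1 madj_rotY by (rule lift1_lin)

definition psi :: "nat \<Rightarrow> nat \<Rightarrow> nat \<Rightarrow> cmat \<Rightarrow> cmat" where
  "psi n q a X = (let J = lift1 n q Jm; K = lift1 n q (madj Jm) in
     if a = 0 then (\<lambda>i j. (X i j + mmul (2^n) K (mmul (2^n) X J) i j) / 2)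
     else if a = 1 then (\<lambda>i j. (X i j - mmul (2^n) K (mmul (2^n) X J) i j) / 2)
     else (\<lambda>i j. (mmul (2^n) X J i j + mmul (2^n) K X i j) / 2))"

definition bf :: "nat \<Rightarrow> real \<Rightarrow> real" where
  "bf a t = (if a = 0 then 1 else if a = 1 then cos (2 * t) else sin (2 * t))"

lemma trig_id:
  fixes x y u v :: complex
  shows "complex_of_real (cos t) * (complex_of_real (cos t) * x + complex_of_real (sin t) * u)
       + complex_of_real (sin t) * (complex_of_real (cos t) * v + complex_of_real (sin t) * y)
       = (x + y) / 2 + complex_of_real (cos (2 * t)) * ((x - y) / 2) + complex_of_real (sin (2 * t)) * ((u + v) / 2)"
proof -
  define c where "c = complex_of_real (cos t)"
  define s where "s = complex_of_real (sin t)"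
  have h: "c * c + s * s = 1" unfolding c_def s_def
    by (metis of_real_add of_real_mult of_real_1 sin_cos_squared_add3 add.commute)
  have c2: "complex_of_real (cos (2 * t)) = c * c - s * s" unfolding c_def s_def
    by (simp add: cos_double power2_eq_square)
  have s2: "complex_of_real (sin (2 * t)) = 2 * s * c" unfolding c_def s_def
    by (simp add: sin_double)
  have "c * (c * x + s * u) + s * (c * v + s * y) = (x + y) / 2 * (c * c + s* s) + (c * c - s* s) * ((x - y) / 2) + (2* s * c) * ((u + v) / 2)"
    by (simp add: field_simps)
  then show ?thesis using h c2 s2 unfolding c_def s_def by simp
qed

lemma mmul_lift1_mid_left:
  assumes q: "q \<in> {1..n}" and i: "i < 2^n"
  shows "mmul (2^n) (lift1 n q mid) Y i j = Y i j"
proof -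
  have "mmul (2^n) (lift1 n q mid) Y i j = mmul (2^n) mid Y i j"
    by (rule mmul_cong_entry) (use lift1_mid[OF q i] in auto)
  then show ?thesis using mmul_mid_left[OF i] by simp
qed

lemma mmul_lift1_mid_right:
  assumes q: "q \<in> {1..n}" and j: "j < 2^n"
  shows "mmul (2^n) Y (lift1 n q mid) i j = Y i j"
proof -
  have "mmul (2^n) Y (lift1 n q mid) i j = mmul (2^n) Y mid i j"
    by (rule mmul_cong_entry) (use lift1_mid[OF q _ j] in auto)
  then show ?thesis using mmul_mid_right[OF j] by simp
qed

lemma rot_conj:
  assumes q: "q \<in> {1..n}" and i: "i < 2^n" and j: "j < 2^n"
  shows "mmul (2^n) (madj (lift1 n q (rotY t))) (mmul (2^n) X (lift1 n q (rotY t))) i j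
       = (\<Sum>a<3. complex_of_real (bf a t) * psi n q a X i j)"
proof -
  define N where "N = (2::nat)^n"
  define c where "c = complex_of_real (cos t)"
  define s where "s = complex_of_real (sin t)"
  define I where "I = lift1 n q mid"
  define J where "J = lift1 n q Jm"
  define K where "K = lift1 n q (madj Jm)"
  have G: "lift1 n q (rotY t) = (\<lambda>i j. c * I i j + s * J i j)"
    unfolding c_def s_def I_def J_def by (rule lift1_rot)
  have GA: "madj (lift1 n q (rotY t)) = (\<lambda>i j. c * I i j + s * K i j)"
    unfolding c_def s_def I_def K_def by (rule madj_lift1_rot)
  have e1: "mmul N I (mmul N X I) i j = X i j"
    unfolding N_def I_def using mmul_lift1_mid_left[OF q i] mmul_lift1_mid_right[OF q j] by simp
  have e2: "mmul N I (mmul N X J) i j = mmul N X J i j"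
    unfolding N_def I_def using mmul_lift1_mid_left[OF q i] by simp
  have e3: "mmul N K (mmul N X I) i j = mmul N K X i j"
    unfolding N_def I_def by (rule mmul_cong_entry) (use mmul_lift1_mid_right[OF q j] in auto)
  have "mmul N (madj (lift1 n q (rotY t))) (mmul N X (lift1 n q (rotY t))) i j
     = c * (c * mmul N I (mmul N X I) i j + s * mmul N I (mmul N X J) i j)
       + s * (c * mmul N K (mmul N X I) i j + s * mmul N K (mmul N X J) i j)"
    unfolding GA unfolding G mmul_lin_left mmul_lin_right by simp
  also have "\<dots> = c * (c * X i j + s * mmul N X J i j) + s * (c * mmul N K X i j + s * mmul N K (mmul N X J) i j)"
    using e1 e2 e3 by simp
  also have "\<dots> = (X i j + mmul N K (mmul N X J) i j) / 2
     + complex_of_real (cos (2 * t)) * ((X i j - mmul N K (mmul N X J) i j) / 2)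
     + complex_of_real (sin (2 * t)) * ((mmul N X J i j + mmul N K X i j) / 2)"
    unfolding c_def s_def by (rule trig_id)
  also have "\<dots> = (\<Sum>a<3. complex_of_real (bf a t) * psi n q a X i j)"
    by (simp add: numeral_3_eq_3 lessThan_Suc bf_def psi_def Let_def N_def J_def K_def)
  finally show ?thesis unfolding N_def .
qed

lemma psi_cong:
  assumes X: "\<And>i j. i < 2^n \<Longrightarrow> j < 2^n \<Longrightarrow> X i j = Y i j" and i: "i < 2^n" and j: "j < 2^n"
  shows "psi n q a X i j = psi n q a Y i j"
proof -
  have m1: "mmul (2^n) X B l j = mmul (2^n) Y B l j" if "l < 2^n" for B l
    by (rule mmul_cong_entry) (use X that in auto)
  have m2: "mmul (2^n) A (mmul (2^n) X B) i j = mmul (2^n) A (mmul (2^n) Y B) i j" for A B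
    by (rule mmul_cong_entry) (use m1 in auto)
  have m3: "mmul (2^n) A X i j = mmul (2^n) A Y i j" for A
    by (rule mmul_cong_entry) (use X j in auto)
  show ?thesis unfolding psi_def Let_def using X[OF i j] m1[OF i] m2 m3 by simp
qed

lemma psi_scale: "psi n q a (\<lambda>i j. x * X i j) = (\<lambda>i j. x * psi n q a X i j)"
  unfolding psi_def Let_def mmul_scale_left mmul_scale_right by (auto intro!: ext simp: field_simps)

definition psi2 :: "nat \<Rightarrow> cmat \<Rightarrow> cmat" where
  "psi2 a A = (if a = 0 then (\<lambda>x y. (A x y + mmul 2 (madj Jm) (mmul 2 A Jm) x y) / 2)
     else if a = 1 then (\<lambda>x y. (A x y - mmul 2 (madj Jm) (mmul 2 A Jm) x y) / 2)
     else (\<lambda>x y. (mmul 2 A Jm x y + mmul 2 (madj Jm) A x y) / 2))"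

lemma lift1_half_add: "lift1 n q (\<lambda>x y. (A x y + B x y) / 2) i j = (lift1 n q A i j + lift1 n q B i j) / 2"
  unfolding lift1_def by auto

lemma lift1_half_diff: "lift1 n q (\<lambda>x y. (A x y - B x y) / 2) i j = (lift1 n q A i j - lift1 n q B i j) / 2"
  unfolding lift1_def by auto

lemma psi_same:
  assumes q: "q \<in> {1..n}" and i: "i < 2^n" and j: "j < 2^n"
  shows "psi n q a (lift1 n q A) i j = lift1 n q (psi2 a A) i j"
proof -
  have a1: "mmul (2^n) (lift1 n q A) (lift1 n q Jm) l j = lift1 n q (mmul 2 A Jm) l j" if "l < 2^n" for l
    by (rule lift1_mul[OF q that j])
  have a2: "mmul (2^n) (lift1 n q (madj Jm)) (mmul (2^n) (lift1 n q A) (lift1 n q Jm)) i j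
       = lift1 n q (mmul 2 (madj Jm) (mmul 2 A Jm)) i j"
  proof -
    have "mmul (2^n) (lift1 n q (madj Jm)) (mmul (2^n) (lift1 n q A) (lift1 n q Jm)) i j
        = mmul (2^n) (lift1 n q (madj Jm)) (lift1 n q (mmul 2 A Jm)) i j"
      by (rule mmul_cong_entry) (use a1 in auto)
    also have "\<dots> = lift1 n q (mmul 2 (madj Jm) (mmul 2 A Jm)) i j" by (rule lift1_mul[OF q i j])
    finally show ?thesis .
  qed
  have a3: "mmul (2^n) (lift1 n q A) (lift1 n q Jm) i j = lift1 n q (mmul 2 A Jm) i j" by (rule lift1_mul[OF q i j])
  have a4: "mmul (2^n) (lift1 n q (madj Jm)) (lift1 n q A) i j = lift1 n q (mmul 2 (madj Jm) A) i j" by (rule lift1_mul[OF q i j])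
  show ?thesis unfolding psi_def psi2_def Let_def
    using a2 a3 a4 by (simp add: lift1_half_add lift1_half_diff)
qed

lemma less2_cases: "(a::nat) < 2 \<Longrightarrow> a = 0 \<or> a = 1" by auto

lemma sum2: "(\<Sum>k<2. f k) = f 0 + f (1::nat)"
  by (simp add: numeral_2_eq_2)

lemma Jm_unit: "a < 2 \<Longrightarrow> b < 2 \<Longrightarrow> mmul 2 (madj Jm) Jm a b = mid a b"
  by (auto dest!: less2_cases simp: mmul_def sum2 madj_def Jm_def mid_def)

lemma psi_other:
  assumes q: "q \<in> {1..n}" and q1: "q \<noteq> 1" and n1: "1 \<le> n" and i: "i < 2^n" and j: "j < 2^n"
  shows "psi n q 0 (lift1 n 1 A) i j = lift1 n 1 A i j"
proof -
  have one: "1 \<in> {1..n}" using n1 by simp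
  define X where "X = lift1 n 1 A"
  define J where "J = lift1 n q Jm"
  define K where "K = lift1 n q (madj Jm)"
  have "mmul (2^n) K (mmul (2^n) X J) i j = mmul (2^n) K (mmul (2^n) J X) i j"
    by (rule mmul_cong_entry) (use lift1_comm[OF one q q1[symmetric] _ j] in \<open>auto simp: X_def J_def\<close>)
  also have "\<dots> = mmul (2^n) (mmul (2^n) K J) X i j" by (simp add: mmul_assoc)
  also have "\<dots> = mmul (2^n) (lift1 n q mid) X i j"
  proof (rule mmul_cong_entry)
    fix l :: nat assume l: "l < 2^n"
    have "mmul (2^n) K J i l = lift1 n q (mmul 2 (madj Jm) Jm) i l"
      unfolding K_def J_def by (rule lift1_mul[OF q i l])
    also have "\<dots> = lift1 n q mid i l" by (subst lift1_cong2[of _ mid]) (auto simp: Jm_unit)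
    finally show "mmul (2^n) K J i l = lift1 n q mid i l" .
  qed simp
  also have "\<dots> = X i j" by (rule mmul_lift1_mid_left[OF q i])
  finally have "mmul (2^n) K (mmul (2^n) X J) i j = X i j" .
  then show ?thesis unfolding psi_def Let_def X_def J_def K_def by simp
qed

lemma rot_unit2: "a < 2 \<Longrightarrow> b < 2 \<Longrightarrow> mmul 2 (madj (rotY t)) (rotY t) a b = mid a b"
proof -
  have h: "complex_of_real (cos t) * complex_of_real (cos t) + complex_of_real (sin t) * complex_of_real (sin t) = 1"
    by (metis of_real_add of_real_mult of_real_1 sin_cos_squared_add3 add.commute)
  assume "a < 2" "b < 2"
  then show ?thesis
    using h by (auto dest!: less2_cases simp: mmul_def sum2 madj_def rotY_eq Jm_def mid_def algebra_simps)
qed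

lemma rot_unitary:
  assumes q: "q \<in> {1..n}" and i: "i < 2^n" and j: "j < 2^n"
  shows "mmul (2^n) (madj (lift1 n q (rotY t))) (lift1 n q (rotY t)) i j = mid i j"
proof -
  have "mmul (2^n) (madj (lift1 n q (rotY t))) (lift1 n q (rotY t)) i j = lift1 n q (mmul 2 (madj (rotY t)) (rotY t)) i j"
    unfolding madj_lift1 by (rule lift1_mul[OF q i j])
  also have "\<dots> = lift1 n q mid i j" by (subst lift1_cong2[of _ mid]) (auto simp: rot_unit2)
  also have "\<dots> = mid i j" by (rule lift1_mid[OF q i j])
  finally show ?thesis .
qed

section \<open>Circuit expansion\<close>

fun rq :: "gate list \<Rightarrow> nat list" where
  "rq [] = []"
| "rq (Rot q # gs) = q # rq gs"
| "rq (CX c t # gs) = rq gs"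

fun wfg :: "nat \<Rightarrow> gate list \<Rightarrow> bool" where
  "wfg n [] = True"
| "wfg n (Rot q # gs) = (q \<in> {1..n} \<and> wfg n gs)"
| "wfg n (CX c t # gs) = (c \<in> {1..n} \<and> t \<in> {1..n} \<and> c \<noteq> t \<and> c \<noteq> 1 \<and> wfg n gs)"

fun Op :: "nat \<Rightarrow> gate list \<Rightarrow> nat list \<Rightarrow> cmat \<Rightarrow> cmat" where
  "Op n [] \<sigma> M = M"
| "Op n (Rot q # gs) \<sigma> M = psi n q (hd \<sigma>) (Op n gs (tl \<sigma>) M)"
| "Op n (CX c t # gs) \<sigma> M = mmul (2^n) (madj (cnot n c t)) (mmul (2^n) (Op n gs \<sigma> M) (cnot n c t))"

definition SIG :: "nat \<Rightarrow> nat list set" where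
  "SIG r = {\<sigma>. length \<sigma> = r \<and> set \<sigma> \<subseteq> {..<3}}"

definition beta :: "nat list \<Rightarrow> (nat \<Rightarrow> real) \<Rightarrow> nat \<Rightarrow> real" where
  "beta \<sigma> \<theta> k = (\<Prod>j<length \<sigma>. bf (\<sigma>!j) (\<theta> (k + j)))"

lemma SIG_finite: "finite (SIG r)"
proof -
  have "SIG r = {xs. set xs \<subseteq> {..<3} \<and> length xs = r}" unfolding SIG_def by auto
  then show ?thesis using finite_lists_length_eq[of "{..<3::nat}" r] by simp
qed

lemma SIG_0: "SIG 0 = {[]}" unfolding SIG_def by auto

lemma SIG_Suc: "SIG (Suc r) = (\<lambda>(a, \<sigma>). a # \<sigma>) ` ({..<3} \<times> SIG r)"
proof (intro equalityI subsetI)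
  fix xs assume "xs \<in> SIG (Suc r)"
  then obtain a ys where "xs = a # ys" "a < 3" "ys \<in> SIG r"
    unfolding SIG_def by (cases xs) auto
  then show "xs \<in> (\<lambda>(a, \<sigma>). a # \<sigma>) ` ({..<3} \<times> SIG r)" by force
qed (auto simp: SIG_def)

lemma SIG_Suc_sum: "(\<Sum>\<sigma>\<in>SIG (Suc r). g \<sigma>) = (\<Sum>a<3. \<Sum>\<sigma>\<in>SIG r. g (a # \<sigma>))"
proof -
  have inj: "inj_on (\<lambda>(a, \<sigma>). a # \<sigma>) ({..<3::nat} \<times> SIG r)" by (auto simp: inj_on_def)
  have "(\<Sum>\<sigma>\<in>SIG (Suc r). g \<sigma>) = (\<Sum>p\<in>{..<3} \<times> SIG r. g (case p of (a, \<sigma>) \<Rightarrow> a # \<sigma>))"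
    unfolding SIG_Suc by (subst sum.reindex[OF inj]) (simp add: comp_def)
  also have "\<dots> = (\<Sum>a<3. \<Sum>\<sigma>\<in>SIG r. g (a # \<sigma>))"
    by (subst sum.cartesian_product) (auto intro!: sum.cong split: prod.splits)
  finally show ?thesis .
qed

lemma beta_Nil: "beta [] \<theta> k = 1" unfolding beta_def by simp

lemma beta_Cons: "beta (a # \<sigma>) \<theta> k = bf a (\<theta> k) * beta \<sigma> \<theta> (Suc k)"
  unfolding beta_def by (simp only: length_Cons prod.lessThan_Suc_shift) simp

lemma conj_sum:
  "mmul N P (mmul N (\<lambda>i j. \<Sum>\<sigma>\<in>S. x \<sigma> * Y \<sigma> i j) Q) = (\<lambda>i j. \<Sum>\<sigma>\<in>S. x \<sigma> * mmul N P (mmul N (Y \<sigma>) Q) i j)"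
proof -
  have "mmul N (\<lambda>i j. \<Sum>\<sigma>\<in>S. x \<sigma> * Y \<sigma> i j) Q = (\<lambda>i j. \<Sum>\<sigma>\<in>S. x \<sigma> * mmul N (Y \<sigma>) Q i j)"
    by (simp add: mmul_sum_left mmul_scale_left)
  then show ?thesis by (simp add: mmul_sum_right mmul_scale_right)
qed

lemma conj_cong:
  assumes "\<And>l l'. l < N \<Longrightarrow> l' < N \<Longrightarrow> H l l' = H' l l'" "j < N"
  shows "mmul N P (mmul N H Q) i j = mmul N P (mmul N H' Q) i j"
proof (rule mmul_cong_entry)
  fix l assume "l < N"
  show "mmul N H Q l j = mmul N H' Q l j" by (rule mmul_cong_entry) (use assms \<open>l < N\<close> in auto)
qed simp

lemma circ_conj_split:
  "mmul N (madj (mmul N A G)) (mmul N M (mmul N A G)) = mmul N (madj G) (mmul N (mmul N (madj A) (mmul N M A)) G)"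
  by (simp add: madj_mmul mmul_assoc)

lemma expand:
  assumes "wfg n gs" "i < 2^n" "j < 2^n"
  shows "mmul (2^n) (madj (circ n gs \<theta> k)) (mmul (2^n) M (circ n gs \<theta> k)) i j
       = (\<Sum>\<sigma>\<in>SIG (length (rq gs)). complex_of_real (beta \<sigma> \<theta> k) * Op n gs \<sigma> M i j)"
  using assms
proof (induction gs arbitrary: k i j)
  case Nil
  have "mmul (2^n) (madj mid) (mmul (2^n) M mid) i j = M i j"
    using Nil by (simp add: madj_mid mmul_mid_left mmul_mid_right)
  then show ?case by (simp add: SIG_0 beta_Nil)
next
  case (Cons g gs)
  show ?case
  proof (cases g)
    case (Rot q)
    define A where "A = circ n gs \<theta> (Suc k)"
    define G where "G = lift1 n q (rotY (\<theta> k))"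
    have q: "q \<in> {1..n}" and w: "wfg n gs" using Cons.prems Rot by auto
    let ?H = "\<lambda>i j. \<Sum>\<sigma>\<in>SIG (length (rq gs)). complex_of_real (beta \<sigma> \<theta> (Suc k)) * Op n gs \<sigma> M i j"
    have "mmul (2^n) (madj (circ n (g # gs) \<theta> k)) (mmul (2^n) M (circ n (g # gs) \<theta> k)) i j
        = mmul (2^n) (madj G) (mmul (2^n) (mmul (2^n) (madj A) (mmul (2^n) M A)) G) i j"
      using Rot by (simp add: A_def G_def circ_conj_split)
    also have "\<dots> = mmul (2^n) (madj G) (mmul (2^n) ?H G) i j"
      by (rule conj_cong) (use Cons.IH[OF w] Cons.prems in \<open>auto simp: A_def\<close>)
    also have "\<dots> = (\<Sum>\<sigma>\<in>SIG (length (rq gs)). complex_of_real (beta \<sigma> \<theta> (Suc k)) *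
                       mmul (2^n) (madj G) (mmul (2^n) (Op n gs \<sigma> M) G) i j)"
      by (simp add: conj_sum)
    also have "\<dots> = (\<Sum>\<sigma>\<in>SIG (length (rq gs)). complex_of_real (beta \<sigma> \<theta> (Suc k)) *
                       (\<Sum>a<3. complex_of_real (bf a (\<theta> k)) * psi n q a (Op n gs \<sigma> M) i j))"
      unfolding G_def using rot_conj[OF q Cons.prems(2,3)] by simp
    also have "\<dots> = (\<Sum>a<3. \<Sum>\<sigma>\<in>SIG (length (rq gs)). complex_of_real (beta (a # \<sigma>) \<theta> k) * Op n (g # gs) (a # \<sigma>) M i j)"
      unfolding Rot by (simp add: beta_Cons sum_distrib_left algebra_simps sum.swap[of _ "{..<3}"])
    also have "\<dots> = (\<Sum>\<sigma>\<in>SIG (length (rq (g # gs))). complex_of_real (beta \<sigma> \<theta> k) * Op n (g # gs) \<sigma> M i j)"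
      unfolding Rot by (simp add: SIG_Suc_sum)
    finally show ?thesis .
  next
    case (CX c t)
    define A where "A = circ n gs \<theta> k"
    define C where "C = cnot n c t"
    have w: "wfg n gs" using Cons.prems CX by auto
    let ?H = "\<lambda>i j. \<Sum>\<sigma>\<in>SIG (length (rq gs)). complex_of_real (beta \<sigma> \<theta> k) * Op n gs \<sigma> M i j"
    have "mmul (2^n) (madj (circ n (g # gs) \<theta> k)) (mmul (2^n) M (circ n (g # gs) \<theta> k)) i j
        = mmul (2^n) (madj C) (mmul (2^n) (mmul (2^n) (madj A) (mmul (2^n) M A)) C) i j"
      using CX by (simp add: A_def C_def circ_conj_split)
    also have "\<dots> = mmul (2^n) (madj C) (mmul (2^n) ?H C) i j"
      by (rule conj_cong) (use Cons.IH[OF w] Cons.prems in \<open>auto simp: A_def\<close>)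
    also have "\<dots> = (\<Sum>\<sigma>\<in>SIG (length (rq gs)). complex_of_real (beta \<sigma> \<theta> k) *
                       mmul (2^n) (madj C) (mmul (2^n) (Op n gs \<sigma> M) C) i j)"
      by (simp add: conj_sum)
    also have "\<dots> = (\<Sum>\<sigma>\<in>SIG (length (rq (g # gs))). complex_of_real (beta \<sigma> \<theta> k) * Op n (g # gs) \<sigma> M i j)"
      unfolding CX C_def by simp
    finally show ?thesis .
  qed
qed

lemma circ_unitary:
  assumes "wfg n gs" "i < 2^n" "j < 2^n"
  shows "mmul (2^n) (madj (circ n gs \<theta> k)) (circ n gs \<theta> k) i j = mid i j"
  using assms
proof (induction gs arbitrary: k i j)
  case Nil
  then show ?case by (simp add: madj_mid mmul_mid_left)
next
  case (Cons g gs)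
  have gen: "mmul (2^n) (madj (mmul (2^n) A G)) (mmul (2^n) A G) i j = mid i j"
    if A: "\<And>i j. i < 2^n \<Longrightarrow> j < 2^n \<Longrightarrow> mmul (2^n) (madj A) A i j = mid i j"
    and G: "mmul (2^n) (madj G) G i j = mid i j" for A G
  proof -
    have "mmul (2^n) (madj (mmul (2^n) A G)) (mmul (2^n) A G) i j
        = mmul (2^n) (madj G) (mmul (2^n) (mmul (2^n) (madj A) A) G) i j"
      by (simp add: madj_mmul mmul_assoc)
    also have "\<dots> = mmul (2^n) (madj G) (mmul (2^n) mid G) i j"
      by (rule conj_cong) (use A Cons.prems in auto)
    also have "\<dots> = mmul (2^n) (madj G) G i j"
      by (rule mmul_cong_entry) (auto simp: mmul_mid_left)
    finally show ?thesis using G by simp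
  qed
  show ?case
  proof (cases g)
    case (Rot q)
    then show ?thesis using Cons gen[OF Cons.IH rot_unitary] by auto
  next
    case (CX c t)
    then show ?thesis using Cons gen[OF Cons.IH cnot_unitary] by auto
  qed
qed

definition tau :: "nat \<Rightarrow> gate list \<Rightarrow> cmat \<Rightarrow> nat list \<Rightarrow> real" where
  "tau n gs \<rho> \<sigma> = Re (mtrace (2^n) (mmul (2^n) (Op n gs \<sigma> (lift1 n 1 pauliZ)) \<rho>))"

lemma trace_rewrite:
  "mtrace N (mmul N Z (mmul N V (mmul N \<rho> (madj V)))) = mtrace N (mmul N (mmul N (madj V) (mmul N Z V)) \<rho>)"
proof -
  have "mmul N Z (mmul N V (mmul N \<rho> (madj V))) = mmul N (mmul N (mmul N Z V) \<rho>) (madj V)"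
    by (simp add: mmul_assoc)
  then have "mtrace N (mmul N Z (mmul N V (mmul N \<rho> (madj V)))) = mtrace N (mmul N (madj V) (mmul N (mmul N Z V) \<rho>))"
    by (simp add: mtrace_comm)
  also have "\<dots> = mtrace N (mmul N (mmul N (madj V) (mmul N Z V)) \<rho>)"
    by (simp add: mmul_assoc)
  finally show ?thesis .
qed

lemma obj_expand:
  assumes "wfg n gs"
  shows "objective n gs \<rho> \<theta> = 1/2 + 1/2 * (\<Sum>\<sigma>\<in>SIG (length (rq gs)). beta \<sigma> \<theta> 0 * tau n gs \<rho> \<sigma>)"
proof -
  define V where "V = circuit_unitary n gs \<theta>"
  define Z where "Z = lift1 n 1 pauliZ"
  define S where "S = SIG (length (rq gs))"
  have H: "mmul (2^n) (madj V) (mmul (2^n) Z V) i l = (\<Sum>\<sigma>\<in>S. complex_of_real (beta \<sigma> \<theta> 0) * Op n gs \<sigma> Z i l)"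
    if "i < 2^n" "l < 2^n" for i l
    unfolding V_def circuit_unitary_def S_def using expand[OF assms that] by simp
  have "mtrace (2^n) (mmul (2^n) (mmul (2^n) (madj V) (mmul (2^n) Z V)) \<rho>)
      = (\<Sum>i<2^n. \<Sum>l<2^n. (\<Sum>\<sigma>\<in>S. complex_of_real (beta \<sigma> \<theta> 0) * Op n gs \<sigma> Z i l) * \<rho> l i)"
    unfolding mtrace_def mmul_def[of _ "mmul _ _ _"] using H by (auto intro!: sum.cong)
  also have "\<dots> = (\<Sum>\<sigma>\<in>S. complex_of_real (beta \<sigma> \<theta> 0) * mtrace (2^n) (mmul (2^n) (Op n gs \<sigma> Z) \<rho>))"
    unfolding mtrace_def mmul_def
    by (simp add: sum_distrib_right sum_distrib_left mult.assoc sum.swap[of _ S])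
  finally have T: "Re (mtrace (2^n) (mmul (2^n) (mmul (2^n) (madj V) (mmul (2^n) Z V)) \<rho>))
       = (\<Sum>\<sigma>\<in>S. beta \<sigma> \<theta> 0 * tau n gs \<rho> \<sigma>)"
    by (simp add: tau_def Z_def)
  show ?thesis
    unfolding objective_def Let_def V_def[symmetric] Z_def[symmetric] trace_rewrite T S_def[symmetric] ..
qed

lemma obj_bound:
  assumes w: "wfg n gs" and n1: "1 \<le> n" and dens: "density_matrix n \<rho>"
  shows "\<bar>2 * objective n gs \<rho> \<theta> - 1\<bar> \<le> 1"
proof -
  define N where "N = (2::nat)^n"
  define V where "V = circuit_unitary n gs \<theta>"
  define Z where "Z = lift1 n 1 pauliZ"
  define M where "M = mmul N V (mmul N \<rho> (madj V))"
  have one: "1 \<in> {1..n}" using n1 by simp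
  have psd: "\<And>v. 0 \<le> Re (\<Sum>i<N. \<Sum>j<N. cnj (v i) * \<rho> i j * v j)"
    using dens unfolding density_matrix_def N_def by blast
  have tr1: "mtrace N \<rho> = 1" using dens unfolding density_matrix_def N_def by blast
  have f: "2 * objective n gs \<rho> \<theta> - 1 = Re (mtrace N (mmul N Z M))"
    unfolding objective_def Let_def N_def V_def Z_def M_def by simp
  define z where "z i = (if qbit n 1 i = 0 then 1 else -1::real)" for i
  have Zd: "mmul N Z M i i = complex_of_real (z i) * M i i" if i: "i < N" for i
  proof -
    have "mmul N Z M i i = (\<Sum>l<N. if l = i then pauliZ (qbit n 1 i) (qbit n 1 i) * M l i else 0)"
    proof -
      have zz: "Z i l = (if l = i then pauliZ (qbit n 1 i) (qbit n 1 i) else 0)" if "l < N" for l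
        unfolding Z_def using lift1_diag[OF one, of i l pauliZ] i that by (auto simp: N_def pauliZ_def)
      show ?thesis unfolding mmul_def by (rule sum.cong) (auto simp: zz)
    qed
    also have "\<dots> = complex_of_real (z i) * M i i" using i by (simp add: z_def pauliZ_def)
    finally show ?thesis .
  qed
  have pos: "0 \<le> Re (M i i)" if i: "i < N" for i
  proof -
    define v where "v j = cnj (V i j)" for j
    have "M i i = (\<Sum>j<N. \<Sum>k<N. cnj (v j) * \<rho> j k * v k)"
    proof -
      have "M i i = (\<Sum>j<N. V i j * (\<Sum>k<N. \<rho> j k * cnj (V i k)))"
        unfolding M_def mmul_def madj_def ..
      also have "\<dots> = (\<Sum>j<N. \<Sum>k<N. V i j * \<rho> j k * cnj (V i k))"
        by (simp only: sum_distrib_left mult.assoc)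
      also have "\<dots> = (\<Sum>j<N. \<Sum>k<N. cnj (v j) * \<rho> j k * v k)"
        unfolding v_def by simp
      finally show ?thesis .
    qed
    then show ?thesis using psd[of v] by simp
  qed
  have trM: "mtrace N M = 1"
  proof -
    have "mtrace N M = mtrace N (mmul N (mmul N (madj V) V) \<rho>)"
    proof -
      have "mtrace N M = mtrace N (mmul N (mmul N \<rho> (madj V)) V)" unfolding M_def by (rule mtrace_comm)
      also have "\<dots> = mtrace N (mmul N \<rho> (mmul N (madj V) V))" by (simp only: mmul_assoc)
      also have "\<dots> = mtrace N (mmul N (mmul N (madj V) V) \<rho>)" by (rule mtrace_comm)
      finally show ?thesis .
    qed
    also have "\<dots> = (\<Sum>i<N. \<Sum>l<N. mid i l * \<rho> l i)"
      unfolding mtrace_def mmul_def[of N "mmul N (madj V) V"]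
      by (rule sum.cong) (auto intro!: sum.cong simp: N_def V_def circuit_unitary_def circ_unitary[OF w])
    also have "\<dots> = mtrace N \<rho>"
      unfolding mtrace_def by (rule sum.cong) (auto simp: mmul_mid_left[unfolded mmul_def])
    also have "\<dots> = 1" by (rule tr1)
    finally show ?thesis .
  qed
  have "Re (mtrace N (mmul N Z M)) = (\<Sum>i<N. z i * Re (M i i))"
    unfolding mtrace_def using Zd by (simp add: Re_sum)
  moreover have "\<bar>\<Sum>i<N. z i * Re (M i i)\<bar> \<le> (\<Sum>i<N. Re (M i i))"
  proof -
    have "\<bar>\<Sum>i<N. z i * Re (M i i)\<bar> \<le> (\<Sum>i<N. \<bar>z i * Re (M i i)\<bar>)" by (rule sum_abs)
    also have "\<dots> = (\<Sum>i<N. Re (M i i))"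
      by (rule sum.cong) (use pos in \<open>auto simp: z_def abs_mult\<close>)
    finally show ?thesis .
  qed
  moreover have "(\<Sum>i<N. Re (M i i)) = 1" using trM unfolding mtrace_def by (simp add: Re_sum[symmetric])
  ultimately show ?thesis using f by simp
qed

section \<open>Integration\<close>

abbreviation UU :: "real measure" where "UU \<equiv> uniform_measure lborel {0..2*pi}"

lemma UU_prob: "prob_space UU"
  by (rule prob_space_uniform_measure) (simp_all)

lemma UU_eq: "UU = density lborel (\<lambda>x. ennreal (indicator {0..2*pi} x / (2*pi)))"
proof -
  have "(\<lambda>x. indicator {0..2*pi} x / emeasure lborel {0..2*pi}) = (\<lambda>x::real. ennreal (indicator {0..2*pi} x / (2*pi)))"
  proof
    fix x :: real
    have e: "emeasure lborel {0..2*pi} = ennreal (2*pi)" by simp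
    show "indicator {0..2*pi} x / emeasure lborel {0..2*pi} = ennreal (indicator {0..2*pi} x / (2*pi))"
      unfolding e by (cases "x \<in> {0..2*pi}") (simp_all add: divide_ennreal[symmetric])
  qed
  then show ?thesis unfolding uniform_measure_def by simp
qed

lemma intU:
  assumes F: "\<And>x. DERIV F x :> g x" and g: "\<And>x. isCont g x"
  shows "has_bochner_integral UU g ((F (2*pi) - F 0) / (2*pi))"
proof -
  have h1: "has_bochner_integral lborel (\<lambda>x. g x * indicator {0..2*pi} x) (F (2*pi) - F 0)"
    by (rule has_bochner_integral_FTC_Icc_real) (use F g in auto)
  have h2: "has_bochner_integral lborel (\<lambda>x. (indicator {0..2*pi} x / (2*pi)) *\<^sub>R g x) ((F (2*pi) - F 0) / (2*pi))"
  proof -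
    have "has_bochner_integral lborel (\<lambda>x. g x * indicator {0..2*pi} x * (1 / (2*pi))) ((F (2*pi) - F 0) * (1 / (2*pi)))"
      using h1 by (rule has_bochner_integral_mult_left)
    then show ?thesis by (rule has_bochner_integral_cong[THEN iffD1, rotated -1]) (auto simp: field_simps)
  qed
  have gm: "g \<in> borel_measurable lborel"
    using g by (auto intro!: borel_measurable_continuous_onI continuous_at_imp_continuous_on)
  show ?thesis unfolding UU_eq
    by (rule has_bochner_integral_density[OF gm _ _ h2]) auto
qed

definition dbf :: "nat \<Rightarrow> real \<Rightarrow> real" where
  "dbf a t = (if a = 0 then 0 else if a = 1 then - 2 * sin (2*t) else 2 * cos (2*t))"

lemma DERIV_bf: "DERIV (bf a) t :> dbf a t"
  unfolding bf_def dbf_def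
  by (cases "a = 0"; cases "a = 1") (auto intro!: derivative_eq_intros)

lemma cos4: "cos (4 * x) = 2 * (cos (2 * x))\<^sup>2 - (1::real)"
proof -
  have "cos (4 * x) = cos (2 * (2 * x))" by simp
  also have "\<dots> = 2 * (cos (2 * x))\<^sup>2 - 1" by (rule cos_double_cos)
  finally show ?thesis .
qed

lemma sin4pi: "sin (2 * (2 * pi)) = 0" by (simp only: sin_double) simp
lemma cos4pi: "cos (2 * (2 * pi)) = 1" by (simp only: cos_double) simp
lemma sin8pi: "sin (4 * (2 * pi)) = 0"
proof -
  have "sin (4 * (2 * pi)) = sin (2 * (2 * (2 * pi)))" by simp
  also have "\<dots> = 0" by (simp only: sin_double sin4pi) simp
  finally show ?thesis .
qed

lemma int_1: "has_bochner_integral UU (\<lambda>t. 1::real) 1"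
proof -
  have "has_bochner_integral UU (\<lambda>t. 1::real) (((2*pi) - 0) / (2*pi))"
    by (rule intU) (auto intro!: derivative_eq_intros)
  then show ?thesis by simp
qed

lemma int_c: "has_bochner_integral UU (\<lambda>t. cos (2 * t)) 0"
proof -
  have "has_bochner_integral UU (\<lambda>t. cos (2 * t)) ((sin (2 * (2*pi)) / 2 - sin (2 * 0) / 2) / (2*pi))"
    by (rule intU) (auto intro!: derivative_eq_intros)
  then show ?thesis by (simp add: sin4pi)
qed

lemma int_s: "has_bochner_integral UU (\<lambda>t. sin (2 * t)) 0"
proof -
  have "has_bochner_integral UU (\<lambda>t. sin (2 * t)) ((- cos (2 * (2*pi)) / 2 - (- cos (2 * 0) / 2)) / (2*pi))"
    by (rule intU) (auto intro!: derivative_eq_intros)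
  then show ?thesis by (simp add: cos4pi)
qed

lemma int_cc: "has_bochner_integral UU (\<lambda>t. cos (2 * t) * cos (2 * t)) (1/2)"
proof -
  have "has_bochner_integral UU (\<lambda>t. cos (2 * t) * cos (2 * t)) ((((2*pi)/2 + sin (4 * (2*pi)) / 8) - (0/2 + sin (4 * 0) / 8)) / (2*pi))"
  proof (rule intU)
    fix x :: real
    have c4: "cos (4 * x) = 2 * (cos (2 * x) * cos (2 * x)) - 1" using cos4[of x] by (simp add: power2_eq_square)
    have "1 / 2 + cos (4 * x) * 4 / 8 = cos (2 * x) * cos (2 * x)"
      unfolding c4 by (simp add: field_simps)
    then show "DERIV (\<lambda>x. x / 2 + sin (4 * x) / 8) x :> cos (2 * x) * cos (2 * x)"
      by (auto intro!: derivative_eq_intros)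
  qed auto
  then show ?thesis by (simp add: sin8pi)
qed

lemma int_ss: "has_bochner_integral UU (\<lambda>t. sin (2 * t) * sin (2 * t)) (1/2)"
proof -
  have "has_bochner_integral UU (\<lambda>t. sin (2 * t) * sin (2 * t)) ((((2*pi)/2 - sin (4 * (2*pi)) / 8) - (0/2 - sin (4 * 0) / 8)) / (2*pi))"
  proof (rule intU)
    fix x :: real
    have "sin (2 * x) * sin (2 * x) = 1 - cos (2 * x) * cos (2 * x)"
      using sin_cos_squared_add[of "2*x"] by (simp add: power2_eq_square algebra_simps)
    moreover have c4: "cos (4 * x) = 2 * (cos (2 * x) * cos (2 * x)) - 1" using cos4[of x] by (simp add: power2_eq_square)
    ultimately have "1 / 2 - cos (4 * x) * 4 / 8 = sin (2 * x) * sin (2 * x)"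
      by linarith
    then show "DERIV (\<lambda>x. x / 2 - sin (4 * x) / 8) x :> sin (2 * x) * sin (2 * x)"
      by (auto intro!: derivative_eq_intros)
  qed auto
  then show ?thesis by (simp add: sin8pi)
qed

lemma int_cs: "has_bochner_integral UU (\<lambda>t. cos (2 * t) * sin (2 * t)) 0"
proof -
  have "has_bochner_integral UU (\<lambda>t. cos (2 * t) * sin (2 * t)) ((sin (2 * (2*pi)) * sin (2 * (2*pi)) / 4 - sin (2 * 0) * sin (2 * 0) / 4) / (2*pi))"
    by (rule intU) (auto intro!: derivative_eq_intros)
  then show ?thesis by (simp add: sin4pi)
qed

definition cb :: "nat \<Rightarrow> real" where "cb a = (if a = 0 then 1 else 1/2)"

lemma less3_cases: "(a::nat) < 3 \<Longrightarrow> a = 0 \<or> a = 1 \<or> a = 2" by auto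

lemma int_sc: "has_bochner_integral UU (\<lambda>t. sin (2 * t) * cos (2 * t)) 0"
  using int_cs by (simp add: mult.commute)

lemma int_bf:
  assumes "a < 3" "a' < 3"
  shows "has_bochner_integral UU (\<lambda>t. bf a t * bf a' t) (if a = a' then cb a else 0)"
  using less3_cases[OF assms(1)] less3_cases[OF assms(2)]
  by (auto simp: bf_def cb_def int_1 int_c int_s int_cc int_ss int_cs int_sc)

definition sw :: "nat \<Rightarrow> nat" where "sw a = (if a = 1 then 2 else if a = 2 then 1 else 0)"
definition ds :: "nat \<Rightarrow> real" where "ds a = (if a = 1 then -2 else if a = 2 then 2 else 0)"

lemma dbf_sw: "a < 3 \<Longrightarrow> dbf a t = ds a * bf (sw a) t"
  by (auto dest!: less3_cases simp: dbf_def ds_def bf_def sw_def)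

definition cd :: "nat \<Rightarrow> real" where "cd a = (if a = 0 then 0 else 2)"

lemma int_dbf:
  assumes a: "a < 3" and a': "a' < 3"
  shows "has_bochner_integral UU (\<lambda>t. dbf a t * dbf a' t) (if a = a' then cd a else 0)"
proof -
  have sw3: "sw a < 3" "sw a' < 3" by (auto simp: sw_def)
  have "has_bochner_integral UU (\<lambda>t. (ds a * ds a') * (bf (sw a) t * bf (sw a') t))
          ((ds a * ds a') * (if sw a = sw a' then cb (sw a) else 0))"
    by (rule has_bochner_integral_mult_right) (rule int_bf[OF sw3])
  moreover have "(ds a * ds a') * (if sw a = sw a' then cb (sw a) else 0) = (if a = a' then cd a else 0)"
    using less3_cases[OF a] less3_cases[OF a'] by (auto simp: ds_def sw_def cb_def cd_def)
  moreover have "(\<lambda>t. (ds a * ds a') * (bf (sw a) t * bf (sw a') t)) = (\<lambda>t. dbf a t * dbf a' t)"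
    using dbf_sw[OF a] dbf_sw[OF a'] by (auto simp: algebra_simps)
  ultimately show ?thesis by simp
qed

lemma SIG_nth: "\<sigma> \<in> SIG P \<Longrightarrow> j < P \<Longrightarrow> \<sigma> ! j < 3"
  unfolding SIG_def by (auto dest: nth_mem)

lemma SIG_len: "\<sigma> \<in> SIG P \<Longrightarrow> length \<sigma> = P"
  unfolding SIG_def by auto

lemma orth:
  fixes u :: "nat \<Rightarrow> nat \<Rightarrow> real \<Rightarrow> real" and x :: "nat list \<Rightarrow> real"
  assumes int: "\<And>j a a'. j < P \<Longrightarrow> a < 3 \<Longrightarrow> a' < 3 \<Longrightarrow>
      has_bochner_integral UU (\<lambda>t. u j a t * u j a' t) (if a = a' then cst j a else 0)"
  shows "has_bochner_integral (PiM {..<P} (\<lambda>_. UU))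
           (\<lambda>\<theta>. (\<Sum>\<sigma>\<in>SIG P. x \<sigma> * (\<Prod>j<P. u j (\<sigma>!j) (\<theta> j)))\<^sup>2)
           (\<Sum>\<sigma>\<in>SIG P. (x \<sigma>)\<^sup>2 * (\<Prod>j<P. cst j (\<sigma>!j)))"
proof -
  interpret product_prob_space "\<lambda>_. UU" "{..<P}"
    by (simp add: product_prob_space_def product_sigma_finite_def product_prob_space_axioms_def UU_prob prob_space_imp_sigma_finite)
  have pair: "has_bochner_integral (PiM {..<P} (\<lambda>_. UU))
      (\<lambda>\<theta>. \<Prod>j<P. u j (\<sigma>!j) (\<theta> j) * u j (\<sigma>'!j) (\<theta> j))
      (if \<sigma> = \<sigma>' then (\<Prod>j<P. cst j (\<sigma>!j)) else 0)"
    if s: "\<sigma> \<in> SIG P" and s': "\<sigma>' \<in> SIG P" for \<sigma> \<sigma>'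
  proof -
    let ?f = "\<lambda>j t. u j (\<sigma>!j) t * u j (\<sigma>'!j) t"
    have ij: "has_bochner_integral UU (?f j) (if \<sigma>!j = \<sigma>'!j then cst j (\<sigma>!j) else 0)" if "j \<in> {..<P}" for j
      using int[of j "\<sigma>!j" "\<sigma>'!j"] that SIG_nth[OF s] SIG_nth[OF s'] by auto
    have ij1: "integrable UU (?f j)" if "j \<in> {..<P}" for j
      using ij[OF that] by (simp only: has_bochner_integral_iff)
    have ij2: "integral\<^sup>L UU (?f j) = (if \<sigma>!j = \<sigma>'!j then cst j (\<sigma>!j) else 0)" if "j \<in> {..<P}" for j
      using ij[OF that] by (simp only: has_bochner_integral_iff)
    have intg: "integrable (PiM {..<P} (\<lambda>_. UU)) (\<lambda>\<theta>. \<Prod>j\<in>{..<P}. ?f j (\<theta> j))"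
      by (rule product_integrable_prod[OF finite_lessThan ij1])
    have "integral\<^sup>L (PiM {..<P} (\<lambda>_. UU)) (\<lambda>\<theta>. \<Prod>j\<in>{..<P}. ?f j (\<theta> j)) = (\<Prod>j\<in>{..<P}. integral\<^sup>L UU (?f j))"
      by (rule product_integral_prod[OF finite_lessThan ij1])
    also have "\<dots> = (\<Prod>j\<in>{..<P}. if \<sigma>!j = \<sigma>'!j then cst j (\<sigma>!j) else 0)"
      by (rule prod.cong[OF refl ij2])
    also have "\<dots> = (if \<sigma> = \<sigma>' then (\<Prod>j<P. cst j (\<sigma>!j)) else 0)"
    proof (cases "\<sigma> = \<sigma>'")
      case False
      have "\<exists>j<P. \<sigma>!j \<noteq> \<sigma>'!j"
      proof (rule ccontr)
        assume "\<not> (\<exists>j<P. \<sigma>!j \<noteq> \<sigma>'!j)"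
        then have "\<sigma> = \<sigma>'" by (intro nth_equalityI) (use SIG_len[OF s] SIG_len[OF s'] in auto)
        with False show False ..
      qed
      then obtain j where j: "j < P" "\<sigma>!j \<noteq> \<sigma>'!j" by blast
      have "(\<Prod>j\<in>{..<P}. if \<sigma>!j = \<sigma>'!j then cst j (\<sigma>!j) else 0) = 0"
        by (rule prod_zero) (use j in auto)
      then show ?thesis using False by simp
    qed simp
    finally show ?thesis using intg by (simp add: has_bochner_integral_iff)
  qed
  have "has_bochner_integral (PiM {..<P} (\<lambda>_. UU))
      (\<lambda>\<theta>. \<Sum>\<sigma>\<in>SIG P. \<Sum>\<sigma>'\<in>SIG P. x \<sigma> * x \<sigma>' * (\<Prod>j<P. u j (\<sigma>!j) (\<theta> j) * u j (\<sigma>'!j) (\<theta> j)))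
      (\<Sum>\<sigma>\<in>SIG P. \<Sum>\<sigma>'\<in>SIG P. x \<sigma> * x \<sigma>' * (if \<sigma> = \<sigma>' then (\<Prod>j<P. cst j (\<sigma>!j)) else 0))"
    by (intro has_bochner_integral_sum has_bochner_integral_mult_right pair)
  moreover have "(\<Sum>\<sigma>\<in>SIG P. \<Sum>\<sigma>'\<in>SIG P. x \<sigma> * x \<sigma>' * (if \<sigma> = \<sigma>' then (\<Prod>j<P. cst j (\<sigma>!j)) else 0))
      = (\<Sum>\<sigma>\<in>SIG P. (x \<sigma>)\<^sup>2 * (\<Prod>j<P. cst j (\<sigma>!j)))"
  proof (rule sum.cong)
    fix \<sigma> assume "\<sigma> \<in> SIG P"
    then show "(\<Sum>\<sigma>'\<in>SIG P. x \<sigma> * x \<sigma>' * (if \<sigma> = \<sigma>' then (\<Prod>j<P. cst j (\<sigma>!j)) else 0))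
      = (x \<sigma>)\<^sup>2 * (\<Prod>j<P. cst j (\<sigma>!j))"
      by (simp add: if_distrib[where f="\<lambda>y. _ * y"] sum.delta SIG_finite power2_eq_square cong: if_cong)
  qed simp
  moreover have "(\<lambda>\<theta>. \<Sum>\<sigma>\<in>SIG P. \<Sum>\<sigma>'\<in>SIG P. x \<sigma> * x \<sigma>' * (\<Prod>j<P. u j (\<sigma>!j) (\<theta> j) * u j (\<sigma>'!j) (\<theta> j)))
     = (\<lambda>\<theta>. (\<Sum>\<sigma>\<in>SIG P. x \<sigma> * (\<Prod>j<P. u j (\<sigma>!j) (\<theta> j)))\<^sup>2)"
    by (auto simp: power2_eq_square sum_product prod.distrib algebra_simps intro!: ext)
  ultimately show ?thesis by simp
qed

lemma beta0: "\<sigma> \<in> SIG P \<Longrightarrow> beta \<sigma> \<theta> 0 = (\<Prod>j<P. bf (\<sigma>!j) (\<theta> j))"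
  unfolding beta_def by (simp add: SIG_len)

definition ud :: "nat \<Rightarrow> nat \<Rightarrow> nat \<Rightarrow> real \<Rightarrow> real" where
  "ud k j a t = (if j = k then dbf a t else bf a t)"

lemma obj_prod:
  assumes w: "wfg n gs" and hP: "P = length (rq gs)"
  shows "objective n gs \<rho> \<theta> = 1/2 + 1/2 * (\<Sum>\<sigma>\<in>SIG P. tau n gs \<rho> \<sigma> * (\<Prod>j<P. bf (\<sigma>!j) (\<theta> j)))"
  unfolding obj_expand[OF w] hP[symmetric] by (auto intro!: sum.cong simp: beta0)

lemma deriv_f:
  assumes w: "wfg n gs" and hP: "P = length (rq gs)" and k: "k < P"
  shows "deriv (\<lambda>t. objective n gs \<rho> (\<theta>(k:=t))) (\<theta> k)
       = (\<Sum>\<sigma>\<in>SIG P. (tau n gs \<rho> \<sigma> / 2) * (\<Prod>j<P. ud k j (\<sigma>!j) (\<theta> j)))"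
proof -
  define C where "C \<sigma> = (\<Prod>j\<in>{..<P}-{k}. bf (\<sigma>!j) (\<theta> j))" for \<sigma>
  have kk: "k \<in> {..<P}" using k by simp
  have eq: "objective n gs \<rho> (\<theta>(k:=t)) = 1/2 + 1/2 * (\<Sum>\<sigma>\<in>SIG P. (tau n gs \<rho> \<sigma> * C \<sigma>) * bf (\<sigma>!k) t)" for t
  proof -
    have "(\<Prod>j<P. bf (\<sigma>!j) ((\<theta>(k:=t)) j)) = bf (\<sigma>!k) t * C \<sigma>" for \<sigma>
      unfolding C_def by (subst prod.remove[OF finite_lessThan kk]) (auto intro!: prod.cong)
    then show ?thesis unfolding obj_prod[OF w hP] by (simp add: ac_simps)
  qed
  have d1: "DERIV (\<lambda>z. (tau n gs \<rho> \<sigma> * C \<sigma>) * bf (\<sigma>!k) z) (\<theta> k) :> (tau n gs \<rho> \<sigma> * C \<sigma>) * dbf (\<sigma>!k) (\<theta> k)" for \<sigma>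
    by (rule DERIV_cmult[OF DERIV_bf])
  have d2: "DERIV (\<lambda>z. \<Sum>\<sigma>\<in>SIG P. (tau n gs \<rho> \<sigma> * C \<sigma>) * bf (\<sigma>!k) z) (\<theta> k) :> (\<Sum>\<sigma>\<in>SIG P. (tau n gs \<rho> \<sigma> * C \<sigma>) * dbf (\<sigma>!k) (\<theta> k))"
    by (rule DERIV_sum) (rule d1)
  have D: "DERIV (\<lambda>t. 1/2 + 1/2 * (\<Sum>\<sigma>\<in>SIG P. (tau n gs \<rho> \<sigma> * C \<sigma>) * bf (\<sigma>!k) t)) (\<theta> k)
           :> 0 + 1/2 * (\<Sum>\<sigma>\<in>SIG P. (tau n gs \<rho> \<sigma> * C \<sigma>) * dbf (\<sigma>!k) (\<theta> k))"
    by (intro DERIV_add DERIV_const DERIV_cmult d2)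
  have "deriv (\<lambda>t. objective n gs \<rho> (\<theta>(k:=t))) (\<theta> k) = 0 + 1/2 * (\<Sum>\<sigma>\<in>SIG P. (tau n gs \<rho> \<sigma> * C \<sigma>) * dbf (\<sigma>!k) (\<theta> k))"
    unfolding eq by (rule DERIV_imp_deriv[OF D])
  also have "\<dots> = (\<Sum>\<sigma>\<in>SIG P. (tau n gs \<rho> \<sigma> / 2) * (\<Prod>j<P. ud k j (\<sigma>!j) (\<theta> j)))"
  proof -
    have "(\<Prod>j<P. ud k j (\<sigma>!j) (\<theta> j)) = dbf (\<sigma>!k) (\<theta> k) * C \<sigma>" for \<sigma>
      unfolding C_def by (subst prod.remove[OF finite_lessThan kk]) (auto intro!: prod.cong simp: ud_def)
    then show ?thesis by (simp add: sum_distrib_left ac_simps)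
  qed
  finally show ?thesis .
qed

lemma grad_eq:
  assumes w: "wfg n gs" and hP: "P = length (rq gs)"
  shows "grad_sq P (objective n gs \<rho>) \<theta>
      = (\<Sum>k<P. (\<Sum>\<sigma>\<in>SIG P. (tau n gs \<rho> \<sigma> / 2) * (\<Prod>j<P. ud k j (\<sigma>!j) (\<theta> j)))\<^sup>2)"
  unfolding grad_sq_def using deriv_f[OF w hP] by simp

definition cstk :: "nat \<Rightarrow> nat \<Rightarrow> nat \<Rightarrow> real" where
  "cstk k j a = (if j = k then cd a else cb a)"

lemma int_ud:
  assumes "a < 3" "a' < 3"
  shows "has_bochner_integral UU (\<lambda>t. ud k j a t * ud k j a' t) (if a = a' then cstk k j a else 0)"
proof (cases "j = k")
  case True
  then have e: "(\<lambda>t. ud k j a t * ud k j a' t) = (\<lambda>t. dbf a t * dbf a' t)" "cstk k j a = cd a"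
    by (auto simp: ud_def cstk_def)
  show ?thesis unfolding e by (rule int_dbf[OF assms])
next
  case False
  then have e: "(\<lambda>t. ud k j a t * ud k j a' t) = (\<lambda>t. bf a t * bf a' t)" "cstk k j a = cb a"
    by (auto simp: ud_def cstk_def)
  show ?thesis unfolding e by (rule int_bf[OF assms])
qed

lemma expect_grad:
  assumes w: "wfg n gs" and hP: "P = length (rq gs)"
  shows "has_bochner_integral (PiM {..<P} (\<lambda>_. UU)) (grad_sq P (objective n gs \<rho>))
     (\<Sum>k<P. \<Sum>\<sigma>\<in>SIG P. (tau n gs \<rho> \<sigma> / 2)\<^sup>2 * (\<Prod>j<P. cstk k j (\<sigma>!j)))"
proof -
  have "has_bochner_integral (PiM {..<P} (\<lambda>_. UU))
     (\<lambda>\<theta>. \<Sum>k<P. (\<Sum>\<sigma>\<in>SIG P. (tau n gs \<rho> \<sigma> / 2) * (\<Prod>j<P. ud k j (\<sigma>!j) (\<theta> j)))\<^sup>2)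
     (\<Sum>k<P. \<Sum>\<sigma>\<in>SIG P. (tau n gs \<rho> \<sigma> / 2)\<^sup>2 * (\<Prod>j<P. cstk k j (\<sigma>!j)))"
    by (intro has_bochner_integral_sum orth int_ud)
  moreover have "grad_sq P (objective n gs \<rho>) =
     (\<lambda>\<theta>. \<Sum>k<P. (\<Sum>\<sigma>\<in>SIG P. (tau n gs \<rho> \<sigma> / 2) * (\<Prod>j<P. ud k j (\<sigma>!j) (\<theta> j)))\<^sup>2)"
    using grad_eq[OF w hP] by auto
  ultimately show ?thesis by simp
qed

lemma expect_sq:
  assumes w: "wfg n gs" and hP: "P = length (rq gs)"
  shows "has_bochner_integral (PiM {..<P} (\<lambda>_. UU)) (\<lambda>\<theta>. (2 * objective n gs \<rho> \<theta> - 1)\<^sup>2)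
     (\<Sum>\<sigma>\<in>SIG P. (tau n gs \<rho> \<sigma>)\<^sup>2 * (\<Prod>j<P. cb (\<sigma>!j)))"
proof -
  have "has_bochner_integral (PiM {..<P} (\<lambda>_. UU))
     (\<lambda>\<theta>. (\<Sum>\<sigma>\<in>SIG P. tau n gs \<rho> \<sigma> * (\<Prod>j<P. bf (\<sigma>!j) (\<theta> j)))\<^sup>2)
     (\<Sum>\<sigma>\<in>SIG P. (tau n gs \<rho> \<sigma>)\<^sup>2 * (\<Prod>j<P. cb (\<sigma>!j)))"
    by (intro orth int_bf)
  moreover have "(\<lambda>\<theta>. (2 * objective n gs \<rho> \<theta> - 1)\<^sup>2) =
     (\<lambda>\<theta>. (\<Sum>\<sigma>\<in>SIG P. tau n gs \<rho> \<sigma> * (\<Prod>j<P. bf (\<sigma>!j) (\<theta> j)))\<^sup>2)"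
    using obj_prod[OF w hP] by auto
  ultimately show ?thesis by simp
qed

lemma sq_le_1:
  assumes w: "wfg n gs" and hP: "P = length (rq gs)" and n1: "1 \<le> n" and dens: "density_matrix n \<rho>"
  shows "(\<Sum>\<sigma>\<in>SIG P. (tau n gs \<rho> \<sigma>)\<^sup>2 * (\<Prod>j<P. cb (\<sigma>!j))) \<le> 1"
proof -
  interpret product_prob_space "\<lambda>_. UU" "{..<P}"
    by (simp add: product_prob_space_def product_sigma_finite_def product_prob_space_axioms_def UU_prob prob_space_imp_sigma_finite)
  have h: "has_bochner_integral (PiM {..<P} (\<lambda>_. UU)) (\<lambda>\<theta>. (2 * objective n gs \<rho> \<theta> - 1)\<^sup>2)
     (\<Sum>\<sigma>\<in>SIG P. (tau n gs \<rho> \<sigma>)\<^sup>2 * (\<Prod>j<P. cb (\<sigma>!j)))" by (rule expect_sq[OF w hP])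
  have "integral\<^sup>L (PiM {..<P} (\<lambda>_. UU)) (\<lambda>\<theta>. (2 * objective n gs \<rho> \<theta> - 1)\<^sup>2) \<le> integral\<^sup>L (PiM {..<P} (\<lambda>_. UU)) (\<lambda>\<theta>. 1)"
  proof (rule integral_mono)
    show "integrable (PiM {..<P} (\<lambda>_. UU)) (\<lambda>\<theta>. (2 * objective n gs \<rho> \<theta> - 1)\<^sup>2)"
      using h by (simp add: has_bochner_integral_iff)
    show "integrable (PiM {..<P} (\<lambda>_. UU)) (\<lambda>\<theta>. 1::real)" by simp
    fix \<theta> :: "nat \<Rightarrow> real"
    have "\<bar>2 * objective n gs \<rho> \<theta> - 1\<bar> \<le> 1" by (rule obj_bound[OF w n1 dens])
    then show "(2 * objective n gs \<rho> \<theta> - 1)\<^sup>2 \<le> 1"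
      by (simp add: abs_le_iff power2_eq_square) (smt (verit) mult_le_one mult_minus_left mult_minus_right)
  qed
  also have "\<dots> = 1" by (simp add: P.prob_space)
  finally show ?thesis using h by (simp add: has_bochner_integral_iff)
qed

fun step :: "gate \<Rightarrow> bool set \<Rightarrow> bool set" where
  "step (Rot q) S = (if q = 1 then (if S = {} then {} else UNIV) else S)"
| "step (CX c t) S = (if t = 1 then S \<inter> {True} else S)"

definition avail :: "gate list \<Rightarrow> bool set" where
  "avail gs = foldr step gs {False}"

lemma avail_Nil: "avail [] = {False}" by (simp add: avail_def)
lemma avail_Cons: "avail (g # gs) = step g (avail gs)" by (simp add: avail_def)

definition Pm :: "bool \<Rightarrow> cmat" where "Pm y = (if y then pauliX else pauliZ)"

lemma psi2_XZ:
  assumes "a < 2" "b < 2"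
  shows "psi2 1 pauliX a b = pauliX a b" "psi2 2 pauliX a b = pauliZ a b"
        "psi2 1 pauliZ a b = pauliZ a b" "psi2 2 pauliZ a b = - pauliX a b"
  using assms by (auto dest!: less2_cases simp: psi2_def mmul_def sum2 madj_def Jm_def pauliX_def pauliZ_def)

lemma lift1_scale: "lift1 n q (\<lambda>a b. x * A a b) = (\<lambda>i j. x * lift1 n q A i j)"
  unfolding lift1_def by (auto intro!: ext)

lemma track:
  assumes "wfg n gs" "1 \<le> n" "y \<in> avail gs"
  shows "\<exists>\<sigma>\<in>SIG (length (rq gs)). (\<forall>j<length (rq gs). (\<sigma>!j \<noteq> 0 \<longleftrightarrow> rq gs ! j = 1)) \<and>
           (\<exists>s::complex. (s = 1 \<or> s = -1) \<and>
              (\<forall>i<2^n. \<forall>j<2^n. Op n gs \<sigma> (lift1 n 1 pauliZ) i j = s * lift1 n 1 (Pm y) i j))"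
  using assms
proof (induction gs arbitrary: y)
  case Nil
  then have "y = False" by (simp add: avail_Nil)
  then show ?case by (intro bexI[of _ "[]"]) (auto simp: SIG_def Pm_def intro!: exI[of _ 1])
next
  case (Cons g gs)
  have one: "1 \<in> {1..n}" using Cons.prems(2) by simp
  show ?case
  proof (cases g)
    case (Rot q)
    have q: "q \<in> {1..n}" and w: "wfg n gs" using Cons.prems Rot by auto
    show ?thesis
    proof (cases "q = 1")
      case True
      have "avail gs \<noteq> {}" using Cons.prems(3) Rot True by (auto simp: avail_Cons split: if_splits)
      then obtain x where x: "x \<in> avail gs" by blast
      from Cons.IH[OF w Cons.prems(2) x] obtain \<sigma>' s' where
        s': "\<sigma>' \<in> SIG (length (rq gs))" "\<forall>j<length (rq gs). (\<sigma>'!j \<noteq> 0 \<longleftrightarrow> rq gs ! j = 1)"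
            "s' = 1 \<or> s' = -1" "\<forall>i<2^n. \<forall>j<2^n. Op n gs \<sigma>' (lift1 n 1 pauliZ) i j = s' * lift1 n 1 (Pm x) i j"
        by blast
      define a where "a = (if y = x then 1 else 2::nat)"
      define sg where "sg = (if x = False \<and> y = True then -1 else 1::complex)"
      have P2: "psi2 a (Pm x) u v = sg * Pm y u v" if "u < 2" "v < 2" for u v
        using psi2_XZ[OF that] unfolding a_def sg_def Pm_def by (cases x; cases y) auto
      have "Op n (g # gs) (a # \<sigma>') (lift1 n 1 pauliZ) i j = (s' * sg) * lift1 n 1 (Pm y) i j"
        if i: "i < 2^n" and j: "j < 2^n" for i j
      proof -
        have "Op n (g # gs) (a # \<sigma>') (lift1 n 1 pauliZ) i j = psi n 1 a (Op n gs \<sigma>' (lift1 n 1 pauliZ)) i j"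
          using Rot True by simp
        also have "\<dots> = psi n 1 a (\<lambda>i j. s' * lift1 n 1 (Pm x) i j) i j"
          by (rule psi_cong) (use s'(4) i j in auto)
        also have "\<dots> = s' * psi n 1 a (lift1 n 1 (Pm x)) i j" by (simp add: psi_scale)
        also have "\<dots> = s' * lift1 n 1 (psi2 a (Pm x)) i j" using psi_same[OF one i j, of a "Pm x"] by simp
        also have "lift1 n 1 (psi2 a (Pm x)) = lift1 n 1 (\<lambda>u v. sg * Pm y u v)"
          by (rule lift1_cong2) (rule P2)
        finally show ?thesis by (simp add: lift1_scale)
      qed
      moreover have "a # \<sigma>' \<in> SIG (length (rq (g # gs)))"
        using s'(1) Rot by (auto simp: SIG_def a_def)
      moreover have "\<forall>j<length (rq (g # gs)). ((a # \<sigma>')!j \<noteq> 0 \<longleftrightarrow> rq (g # gs) ! j = 1)"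
      proof (intro allI impI)
        fix j assume "j < length (rq (g # gs))"
        then show "((a # \<sigma>')!j \<noteq> 0 \<longleftrightarrow> rq (g # gs) ! j = 1)"
          using s'(2) Rot True by (cases j) (auto simp: a_def)
      qed
      moreover have "s' * sg = 1 \<or> s' * sg = -1" using s'(3) by (auto simp: sg_def)
      ultimately show ?thesis by blast
    next
      case False
      have y: "y \<in> avail gs" using Cons.prems(3) Rot False by (simp add: avail_Cons)
      from Cons.IH[OF w Cons.prems(2) y] obtain \<sigma>' s' where
        s': "\<sigma>' \<in> SIG (length (rq gs))" "\<forall>j<length (rq gs). (\<sigma>'!j \<noteq> 0 \<longleftrightarrow> rq gs ! j = 1)"
            "s' = 1 \<or> s' = -1" "\<forall>i<2^n. \<forall>j<2^n. Op n gs \<sigma>' (lift1 n 1 pauliZ) i j = s' * lift1 n 1 (Pm y) i j"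
        by blast
      have "Op n (g # gs) (0 # \<sigma>') (lift1 n 1 pauliZ) i j = s' * lift1 n 1 (Pm y) i j"
        if i: "i < 2^n" and j: "j < 2^n" for i j
      proof -
        have "Op n (g # gs) (0 # \<sigma>') (lift1 n 1 pauliZ) i j = psi n q 0 (Op n gs \<sigma>' (lift1 n 1 pauliZ)) i j"
          using Rot by simp
        also have "\<dots> = psi n q 0 (\<lambda>i j. s' * lift1 n 1 (Pm y) i j) i j"
          by (rule psi_cong) (use s'(4) i j in auto)
        also have "\<dots> = s' * psi n q 0 (lift1 n 1 (Pm y)) i j" by (simp add: psi_scale)
        also have "\<dots> = s' * lift1 n 1 (Pm y) i j" using psi_other[OF q False Cons.prems(2) i j, of "Pm y"] by simp
        finally show ?thesis .
      qed
      moreover have "0 # \<sigma>' \<in> SIG (length (rq (g # gs)))"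
        using s'(1) Rot by (auto simp: SIG_def)
      moreover have "\<forall>j<length (rq (g # gs)). ((0 # \<sigma>')!j \<noteq> 0 \<longleftrightarrow> rq (g # gs) ! j = 1)"
      proof (intro allI impI)
        fix j assume "j < length (rq (g # gs))"
        then show "((0 # \<sigma>')!j \<noteq> 0 \<longleftrightarrow> rq (g # gs) ! j = 1)"
          using s'(2) Rot False by (cases j) auto
      qed
      ultimately show ?thesis using s'(3) by blast
    qed
  next
    case (CX c t)
    have c: "c \<in> {1..n}" and t: "t \<in> {1..n}" and ct: "c \<noteq> t" and c1: "c \<noteq> 1" and w: "wfg n gs"
      using Cons.prems CX by auto
    define y' where "y' = (if t = 1 then True else y)"
    have y': "y' \<in> avail gs" and yy: "t = 1 \<Longrightarrow> y = True"
      using Cons.prems(3) CX by (auto simp: avail_Cons y'_def split: if_splits)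
    from Cons.IH[OF w Cons.prems(2) y'] obtain \<sigma>' s' where
      s': "\<sigma>' \<in> SIG (length (rq gs))" "\<forall>j<length (rq gs). (\<sigma>'!j \<noteq> 0 \<longleftrightarrow> rq gs ! j = 1)"
          "s' = 1 \<or> s' = -1" "\<forall>i<2^n. \<forall>j<2^n. Op n gs \<sigma>' (lift1 n 1 pauliZ) i j = s' * lift1 n 1 (Pm y') i j"
      by blast
    have Py: "Pm y' = Pm y" using yy by (auto simp: y'_def)
    have sym: "t = 1 \<Longrightarrow> (\<forall>a<2. \<forall>b<2. Pm y (1 - a) (1 - b) = Pm y a b)"
      using yy by (auto dest!: less2_cases simp: Pm_def pauliX_def)
    have "Op n (g # gs) \<sigma>' (lift1 n 1 pauliZ) i j = s' * lift1 n 1 (Pm y) i j"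
      if i: "i < 2^n" and j: "j < 2^n" for i j
    proof -
      have "Op n (g # gs) \<sigma>' (lift1 n 1 pauliZ) i j = Op n gs \<sigma>' (lift1 n 1 pauliZ) (cperm n c t i) (cperm n c t j)"
        using CX cnot_conj[OF c t ct i j] by simp
      also have "\<dots> = s' * lift1 n 1 (Pm y) (cperm n c t i) (cperm n c t j)"
        using s'(4) cperm_less[OF t i] cperm_less[OF t j] Py by simp
      also have "\<dots> = s' * lift1 n 1 (Pm y) i j"
        using lift1_cperm[OF c t ct c1 i j Cons.prems(2) sym] by simp
      finally show ?thesis .
    qed
    moreover have "\<sigma>' \<in> SIG (length (rq (g # gs)))" using s'(1) CX by simp
    moreover have "\<forall>j<length (rq (g # gs)). (\<sigma>'!j \<noteq> 0 \<longleftrightarrow> rq (g # gs) ! j = 1)" using s'(2) CX by simp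
    ultimately show ?thesis using s'(3) by blast
  qed
qed

lemma expect_eq:
  assumes w: "wfg n gs" and hP: "P = length (rq gs)"
  shows "expect_params P (grad_sq P (objective n gs \<rho>))
       = (\<Sum>k<P. \<Sum>\<sigma>\<in>SIG P. (tau n gs \<rho> \<sigma> / 2)\<^sup>2 * (\<Prod>j<P. cstk k j (\<sigma>!j)))"
  unfolding expect_params_def using expect_grad[OF w hP] by (simp add: has_bochner_integral_iff)

lemma cb_nonneg: "0 \<le> cb a" by (simp add: cb_def)
lemma cstk_nonneg: "0 \<le> cstk k j a" by (simp add: cstk_def cb_def cd_def)

lemma cstk_prod:
  assumes k: "k < P"
  shows "(\<Prod>j<P. cstk k j (\<sigma>!j)) = cd (\<sigma>!k) * (\<Prod>j\<in>{..<P}-{k}. cb (\<sigma>!j))"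
        "(\<Prod>j<P. cb (\<sigma>!j)) = cb (\<sigma>!k) * (\<Prod>j\<in>{..<P}-{k}. cb (\<sigma>!j))"
proof -
  have kk: "k \<in> {..<P}" using k by simp
  show "(\<Prod>j<P. cstk k j (\<sigma>!j)) = cd (\<sigma>!k) * (\<Prod>j\<in>{..<P}-{k}. cb (\<sigma>!j))"
    by (subst prod.remove[OF finite_lessThan kk]) (auto intro!: prod.cong simp: cstk_def)
  show "(\<Prod>j<P. cb (\<sigma>!j)) = cb (\<sigma>!k) * (\<Prod>j\<in>{..<P}-{k}. cb (\<sigma>!j))"
    by (rule prod.remove[OF finite_lessThan kk])
qed

lemma cstk_le:
  assumes k: "k < P"
  shows "(\<Prod>j<P. cstk k j (\<sigma>!j)) \<le> 4 * (\<Prod>j<P. cb (\<sigma>!j))"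
proof -
  have nn: "0 \<le> (\<Prod>j\<in>{..<P}-{k}. cb (\<sigma>!j))" by (intro prod_nonneg) (simp add: cb_nonneg)
  have "cd (\<sigma>!k) * (\<Prod>j\<in>{..<P}-{k}. cb (\<sigma>!j)) \<le> (4 * cb (\<sigma>!k)) * (\<Prod>j\<in>{..<P}-{k}. cb (\<sigma>!j))"
    by (rule mult_right_mono[OF _ nn]) (simp add: cd_def cb_def)
  then show ?thesis unfolding cstk_prod[OF k] by (simp add: mult.assoc)
qed

lemma cstk_eq:
  assumes k: "k < P" and s: "\<sigma>!k \<noteq> 0"
  shows "(\<Prod>j<P. cstk k j (\<sigma>!j)) = 4 * (\<Prod>j<P. cb (\<sigma>!j))"
  unfolding cstk_prod[OF k] using s by (simp add: cd_def cb_def)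

theorem upper_bound:
  assumes w: "wfg n gs" and hP: "P = length (rq gs)" and n1: "1 \<le> n" and dens: "density_matrix n \<rho>"
  shows "expect_params P (grad_sq P (objective n gs \<rho>)) \<le> real P"
proof -
  have "expect_params P (grad_sq P (objective n gs \<rho>))
       \<le> (\<Sum>k<P. \<Sum>\<sigma>\<in>SIG P. (tau n gs \<rho> \<sigma>)\<^sup>2 * (\<Prod>j<P. cb (\<sigma>!j)))"
    unfolding expect_eq[OF w hP]
  proof (intro sum_mono)
    fix k \<sigma> assume k: "k \<in> {..<P}"
    have "(tau n gs \<rho> \<sigma> / 2)\<^sup>2 * (\<Prod>j<P. cstk k j (\<sigma>!j)) \<le> (tau n gs \<rho> \<sigma> / 2)\<^sup>2 * (4 * (\<Prod>j<P. cb (\<sigma>!j)))"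
      by (rule mult_left_mono[OF cstk_le]) (use k in auto)
    then show "(tau n gs \<rho> \<sigma> / 2)\<^sup>2 * (\<Prod>j<P. cstk k j (\<sigma>!j)) \<le> (tau n gs \<rho> \<sigma>)\<^sup>2 * (\<Prod>j<P. cb (\<sigma>!j))"
      by (simp add: power2_eq_square)
  qed
  also have "\<dots> \<le> (\<Sum>k<P. 1)"
    by (intro sum_mono sq_le_1[OF w hP n1 dens])
  finally show ?thesis by simp
qed

lemma tau_sq:
  assumes "\<forall>i<2^n. \<forall>j<2^n. Op n gs \<sigma> (lift1 n 1 pauliZ) i j = s * A i j" "s = 1 \<or> s = -1"
  shows "(tau n gs \<rho> \<sigma>)\<^sup>2 = (Re (mtrace (2^n) (mmul (2^n) A \<rho>)))\<^sup>2"
proof -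
  have "mtrace (2^n) (mmul (2^n) (Op n gs \<sigma> (lift1 n 1 pauliZ)) \<rho>) = mtrace (2^n) (mmul (2^n) (\<lambda>i j. s * A i j) \<rho>)"
    unfolding mtrace_def by (rule sum.cong[OF refl], rule mmul_cong_entry) (use assms(1) in auto)
  also have "\<dots> = s * mtrace (2^n) (mmul (2^n) A \<rho>)"
    unfolding mmul_scale_left mtrace_def by (simp add: sum_distrib_left)
  finally show ?thesis unfolding tau_def using assms(2) by auto
qed

lemma prod_cb_L:
  assumes "\<sigma> \<in> SIG P" "\<forall>j<P. (\<sigma>!j \<noteq> 0 \<longleftrightarrow> Q j)"
  shows "(\<Prod>j<P. cb (\<sigma>!j)) = (1/2) ^ card {j. j < P \<and> Q j}"
proof -
  have "(\<Prod>j<P. cb (\<sigma>!j)) = (\<Prod>j<P. if Q j then 1/2 else 1)"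
    by (rule prod.cong) (use assms(2) in \<open>auto simp: cb_def\<close>)
  also have "\<dots> = (\<Prod>j\<in>{j. j < P \<and> Q j}. 1/2)"
    by (subst prod.If_cases) (auto simp: lessThan_def Collect_conj_eq[symmetric] intro!: arg_cong[where f="\<lambda>A. prod _ A"])
  also have "\<dots> = (1/2) ^ card {j. j < P \<and> Q j}" by simp
  finally show ?thesis .
qed

theorem lower_bound:
  assumes w: "wfg n gs" and hP: "P = length (rq gs)" and n1: "1 \<le> n"
    and avT: "True \<in> avail gs" and avF: "False \<in> avail gs"
    and hL: "L = card {j. j < P \<and> rq gs ! j = 1}"
  shows "real L / 2^L * alpha n \<rho> \<le> expect_params P (grad_sq P (objective n gs \<rho>))"
proof -
  obtain \<sigma>X sX where X: "\<sigma>X \<in> SIG P" "\<forall>j<P. (\<sigma>X!j \<noteq> 0 \<longleftrightarrow> rq gs ! j = 1)" "sX = 1 \<or> sX = -1"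
     "\<forall>i<2^n. \<forall>j<2^n. Op n gs \<sigma>X (lift1 n 1 pauliZ) i j = sX * lift1 n 1 pauliX i j"
    using track[OF w n1 avT] hP by (auto simp: Pm_def)
  obtain \<sigma>Z sZ where Z: "\<sigma>Z \<in> SIG P" "\<forall>j<P. (\<sigma>Z!j \<noteq> 0 \<longleftrightarrow> rq gs ! j = 1)" "sZ = 1 \<or> sZ = -1"
     "\<forall>i<2^n. \<forall>j<2^n. Op n gs \<sigma>Z (lift1 n 1 pauliZ) i j = sZ * lift1 n 1 pauliZ i j"
    using track[OF w n1 avF] hP by (auto simp: Pm_def)
  have ne: "\<sigma>X \<noteq> \<sigma>Z"
  proof
    assume "\<sigma>X = \<sigma>Z"
    have p0: "(0::nat) < 2^n" by simp
    have "sX * lift1 n 1 pauliX 0 0 = sZ * lift1 n 1 pauliZ 0 0"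
      using X(4) Z(4) p0 \<open>\<sigma>X = \<sigma>Z\<close> by metis
    moreover have "lift1 n 1 pauliX 0 0 = 0" "lift1 n 1 pauliZ 0 0 = 1"
      by (auto simp: lift1_def pauliX_def pauliZ_def qbit_def)
    ultimately show False using Z(3) by auto
  qed
  define tX where "tX = Re (mtrace (2^n) (mmul (2^n) (lift1 n 1 pauliX) \<rho>))"
  define tZ where "tZ = Re (mtrace (2^n) (mmul (2^n) (lift1 n 1 pauliZ) \<rho>))"
  have tXs: "(tau n gs \<rho> \<sigma>X)\<^sup>2 = tX\<^sup>2" unfolding tX_def by (rule tau_sq[OF X(4,3)])
  have tZs: "(tau n gs \<rho> \<sigma>Z)\<^sup>2 = tZ\<^sup>2" unfolding tZ_def by (rule tau_sq[OF Z(4,3)])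
  have cbX: "(\<Prod>j<P. cb (\<sigma>X!j)) = (1/2)^L" unfolding hL by (rule prod_cb_L[OF X(1,2)])
  have cbZ: "(\<Prod>j<P. cb (\<sigma>Z!j)) = (1/2)^L" unfolding hL by (rule prod_cb_L[OF Z(1,2)])
  define trm where "trm k \<sigma> = (tau n gs \<rho> \<sigma> / 2)\<^sup>2 * (\<Prod>j<P. cstk k j (\<sigma>!j))" for k \<sigma>
  have each: "(if rq gs ! k = 1 then (tX\<^sup>2 + tZ\<^sup>2) * (1/2)^L else 0) \<le> (\<Sum>\<sigma>\<in>SIG P. trm k \<sigma>)"
    if k: "k < P" for k
  proof (cases "rq gs ! k = 1")
    case True
    have "trm k \<sigma>X = tX\<^sup>2 * (1/2)^L"
      unfolding trm_def using cstk_eq[OF k, of \<sigma>X] X(2) k True tXs cbX by (simp add: power2_eq_square)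
    moreover have "trm k \<sigma>Z = tZ\<^sup>2 * (1/2)^L"
      unfolding trm_def using cstk_eq[OF k, of \<sigma>Z] Z(2) k True tZs cbZ by (simp add: power2_eq_square)
    moreover have "(\<Sum>\<sigma>\<in>{\<sigma>X, \<sigma>Z}. trm k \<sigma>) \<le> (\<Sum>\<sigma>\<in>SIG P. trm k \<sigma>)"
      by (rule sum_mono2[OF SIG_finite]) (use X(1) Z(1) in \<open>auto simp: trm_def cstk_nonneg prod_nonneg\<close>)
    ultimately show ?thesis using ne True by (simp add: algebra_simps)
  next
    case False
    have "0 \<le> (\<Sum>\<sigma>\<in>SIG P. trm k \<sigma>)"
      by (intro sum_nonneg) (auto simp: trm_def cstk_nonneg prod_nonneg)
    then show ?thesis using False by simp
  qed
  have "(\<Sum>k<P. if rq gs ! k = 1 then (tX\<^sup>2 + tZ\<^sup>2) * (1/2)^L else 0) = real L * ((tX\<^sup>2 + tZ\<^sup>2) * (1/2)^L)"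
  proof -
    have "(\<Sum>k<P. if rq gs ! k = 1 then (tX\<^sup>2 + tZ\<^sup>2) * (1/2)^L else 0) = (\<Sum>k\<in>{j. j < P \<and> rq gs ! j = 1}. (tX\<^sup>2 + tZ\<^sup>2) * (1/2)^L)"
      by (subst sum.If_cases) (auto simp: lessThan_def Collect_conj_eq[symmetric] intro!: arg_cong[where f="\<lambda>A. sum _ A"])
    then show ?thesis using hL by simp
  qed
  moreover have "(\<Sum>k<P. if rq gs ! k = 1 then (tX\<^sup>2 + tZ\<^sup>2) * (1/2)^L else 0) \<le> (\<Sum>k<P. \<Sum>\<sigma>\<in>SIG P. trm k \<sigma>)"
    by (rule sum_mono) (use each in auto)
  moreover have "alpha n \<rho> = tX\<^sup>2 + tZ\<^sup>2" unfolding alpha_def tX_def tZ_def ..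
  then have "real L / 2^L * alpha n \<rho> = real L * ((tX\<^sup>2 + tZ\<^sup>2) * (1/2)^L)"
    by (simp add: power_one_over)
  ultimately have "real L / 2^L * alpha n \<rho> \<le> (\<Sum>k<P. \<Sum>\<sigma>\<in>SIG P. trm k \<sigma>)" by linarith
  then show ?thesis unfolding expect_eq[OF w hP] trm_def by simp
qed

lemma rq_append: "rq (xs @ ys) = rq xs @ rq ys"
proof (induction xs)
  case (Cons a xs) then show ?case by (cases a) auto
qed simp

lemma wfg_append: "wfg n (xs @ ys) = (wfg n xs \<and> wfg n ys)"
proof (induction xs)
  case (Cons a xs) then show ?case by (cases a) auto
qed simp

lemma rq_concat: "rq (concat xss) = concat (map rq xss)"
  by (induction xss) (auto simp: rq_append)

lemma wfg_concat: "wfg n (concat xss) = (\<forall>xs\<in>set xss. wfg n xs)"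
  by (induction xss) (auto simp: wfg_append)

lemma rq_map_Rot: "rq (map (\<lambda>j. Rot (f j)) xs) = map f xs"
  by (induction xs) auto

lemma rq_map_CX: "rq (map (\<lambda>j. CX (c j) (t j)) xs) = []"
  by (induction xs) auto

lemma wfg_map_Rot: "wfg n (map (\<lambda>j. Rot (f j)) xs) = (\<forall>j\<in>set xs. f j \<in> {1..n})"
  by (induction xs) auto

lemma wfg_map_CX: "wfg n (map (\<lambda>j. CX (c j) (t j)) xs) = (\<forall>j\<in>set xs. c j \<in> {1..n} \<and> t j \<in> {1..n} \<and> c j \<noteq> t j \<and> c j \<noteq> 1)"
  by (induction xs) auto

lemma avail_append: "avail (xs @ ys) = foldr step xs (avail ys)"
  by (simp add: avail_def)

lemma foldr_rot_keep: "(\<forall>j\<in>set xs. f j \<noteq> 1) \<Longrightarrow> foldr step (map (\<lambda>j. Rot (f j)) xs) S = S"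
  by (induction xs) auto

lemma foldr_cx_true: "True \<in> S \<Longrightarrow> True \<in> foldr step (map (\<lambda>j. CX (c j) (t j)) xs) S"
  by (induction xs) auto

lemma count_card: "card {j. j < length xs \<and> xs ! j = 1} = length (filter (\<lambda>x. x = 1) xs)"
  by (simp add: length_filter_conv_card)

section \<open>Tree tensor\<close>

definition ttl :: "nat \<Rightarrow> nat \<Rightarrow> gate list" where
  "ttl m l = map (\<lambda>j. Rot (j * 2^(l-1) + 1)) [0..<2^m div 2^(l-1)]
           @ (if l \<le> m then map (\<lambda>j. CX (j * 2^l + 2^(l-1) + 1) (j * 2^l + 1)) [0..<2^m div 2^l] else [])"

lemma tt_eq: "tt_gates m = concat (map (ttl m) [1..<m+2])"
  unfolding tt_gates_def ttl_def Let_def by simp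

lemma pow_div: "l \<le> m \<Longrightarrow> (2::nat)^m div 2^l = 2^(m - l)"
  by (simp add: power_diff)

lemma rq_ttl: "rq (ttl m l) = map (\<lambda>j. j * 2^(l-1) + 1) [0..<2^m div 2^(l-1)]"
  unfolding ttl_def by (simp add: rq_append rq_map_Rot rq_map_CX)

lemma geo: "(\<Sum>l\<in>{1..<Suc k}. (2::nat)^(k - l)) + 1 = 2^k"
proof (induction k)
  case 0 then show ?case by simp
next
  case (Suc k)
  have ins: "{1..<Suc (Suc k)} = insert (Suc k) {1..<Suc k}" by auto
  have "(\<Sum>l\<in>{1..<Suc (Suc k)}. (2::nat)^(Suc k - l)) = 2^(Suc k - Suc k) + (\<Sum>l\<in>{1..<Suc k}. 2^(Suc k - l))"
    unfolding ins by (rule sum.insert) auto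
  also have "(\<Sum>l\<in>{1..<Suc k}. (2::nat)^(Suc k - l)) = (\<Sum>l\<in>{1..<Suc k}. 2 * 2^(k - l))"
    by (rule sum.cong) (auto simp: Suc_diff_le)
  also have "\<dots> = 2 * (\<Sum>l\<in>{1..<Suc k}. 2^(k - l))" by (simp add: sum_distrib_left)
  finally have "(\<Sum>l\<in>{1..<Suc (Suc k)}. (2::nat)^(Suc k - l)) + 1 = 2 * ((\<Sum>l\<in>{1..<Suc k}. 2^(k - l)) + 1)"
    by simp
  then show ?case using Suc by simp
qed

lemma pos_div: "l - 1 \<le> m \<Longrightarrow> 0 < (2::nat)^m div 2^(l-1)"
  by (simp add: pow_div)

lemma tt_len: "length (rq (tt_gates m)) = 2 * 2^m - 1"
proof -
  have "length (rq (tt_gates m)) = (\<Sum>l\<leftarrow>[1..<m+2]. length (rq (ttl m l)))"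
    unfolding tt_eq rq_concat by (simp only: length_concat map_map comp_def)
  also have "\<dots> = (\<Sum>l\<in>{1..<m+2}. length (rq (ttl m l)))"
    by (simp only: sum_set_upt_conv_sum_list_nat[symmetric] set_upt)
  also have "\<dots> = (\<Sum>l\<in>{1..<Suc (m+1)}. (2::nat)^(m+1-l))"
    by (rule sum.cong) (auto simp: rq_ttl pow_div Suc_diff_le)
  also have "\<dots> = 2^(m+1) - 1" using geo[of "m+1"] by simp
  finally show ?thesis by simp
qed

lemma filter_zero_upt: "0 < K \<Longrightarrow> length (filter (\<lambda>j::nat. j = 0) [0..<K]) = 1"
proof -
  assume "0 < K"
  then have "[0..<K] = 0 # [1..<K]" by (simp add: upt_rec)
  moreover have "filter (\<lambda>j::nat. j = 0) [1..<K] = []" by (auto simp: filter_empty_conv)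
  ultimately show ?thesis by simp
qed

lemma tt_count: "card {j. j < length (rq (tt_gates m)) \<and> rq (tt_gates m) ! j = 1} = m + 1"
proof -
  have "card {j. j < length (rq (tt_gates m)) \<and> rq (tt_gates m) ! j = 1}
      = (\<Sum>l\<leftarrow>[1..<m+2]. length (filter (\<lambda>x. x = 1) (rq (ttl m l))))"
    unfolding count_card tt_eq rq_concat by (simp add: filter_concat length_concat comp_def)
  also have "\<dots> = (\<Sum>l\<leftarrow>[1..<m+2]. 1)"
  proof (rule arg_cong[where f=sum_list], rule map_cong[OF refl])
    fix l assume l: "l \<in> set [1..<m+2]"
    have "l - 1 \<le> m" using l by (simp del: upt_Suc; linarith)
    then have pos: "0 < (2::nat)^m div 2^(l-1)" by (rule pos_div)
    have "filter (\<lambda>x. x = 1) (rq (ttl m l)) = map (\<lambda>j. j * 2^(l-1) + 1) (filter (\<lambda>j. j = 0) [0..<2^m div 2^(l-1)])"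
      unfolding rq_ttl filter_map comp_def by simp
    then show "length (filter (\<lambda>x. x = 1) (rq (ttl m l))) = 1"
      using filter_zero_upt[OF pos] by simp
  qed
  also have "\<dots> = m + 1" by (simp add: sum_list_triv)
  finally show ?thesis .
qed

lemma tt_wfg: "wfg (2^m) (tt_gates m)"
  unfolding tt_eq wfg_concat
proof (intro ballI)
  fix xs assume "xs \<in> set (map (ttl m) [1..<m+2])"
  then obtain l where l: "1 \<le> l" "l \<le> m + 1" and xs: "xs = ttl m l" by auto
  have r: "\<forall>j\<in>set [0..<2^m div 2^(l-1)]. j * 2^(l-1) + 1 \<in> {1..2^m}"
  proof
    fix j assume "j \<in> set [0..<2^m div 2^(l-1)]"
    then have "j < 2^(m - (l-1))" using l by (simp add: pow_div)
    then have "j * 2^(l-1) < 2^(m - (l-1)) * 2^(l-1)" by simp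
    also have "\<dots> = 2^m" using l by (simp add: power_add[symmetric])
    finally show "j * 2^(l-1) + 1 \<in> {1..2^m}" by simp
  qed
  have c: "l \<le> m \<Longrightarrow> \<forall>j\<in>set [0..<2^m div 2^l]. j * 2^l + 2^(l-1) + 1 \<in> {1..2^m} \<and> j * 2^l + 1 \<in> {1..2^m}
            \<and> j * 2^l + 2^(l-1) + 1 \<noteq> j * 2^l + 1 \<and> j * 2^l + 2^(l-1) + 1 \<noteq> 1"
  proof
    fix j assume lm: "l \<le> m" and "j \<in> set [0..<2^m div 2^l]"
    then have "j < 2^(m - l)" by (simp add: pow_div)
    then have "Suc j \<le> 2^(m - l)" by simp
    then have "Suc j * 2^l \<le> 2^(m - l) * 2^l" by (rule mult_le_mono1)
    also have "\<dots> = 2^m" using lm by (simp add: power_add[symmetric])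
    finally have a: "j * 2^l + 2^l \<le> 2^m" by simp
    have b: "2^(l-1) + 1 \<le> (2::nat)^l"
    proof -
      have "(2::nat)^l = 2 * 2^(l-1)" using l by (metis Suc_diff_le diff_Suc_1 power_Suc le_add_diff_inverse2 le_numeral_extra(4) minus_nat.diff_0 plus_1_eq_Suc)
      moreover have "1 \<le> (2::nat)^(l-1)" by simp
      ultimately show ?thesis by simp
    qed
    show "j * 2^l + 2^(l-1) + 1 \<in> {1..2^m} \<and> j * 2^l + 1 \<in> {1..2^m}
            \<and> j * 2^l + 2^(l-1) + 1 \<noteq> j * 2^l + 1 \<and> j * 2^l + 2^(l-1) + 1 \<noteq> 1"
      using a b by auto
  qed
  show "wfg (2^m) xs" unfolding xs ttl_def wfg_append wfg_map_Rot
    using r c by (auto simp: wfg_map_CX)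
qed

lemma tt_avail: "avail (tt_gates m) = UNIV"
proof -
  have main: "avail (concat (map (ttl m) [l..<m+2])) = UNIV" if "1 \<le> l" "l \<le> m + 1" for l
    using that(2,1)
  proof (induction l rule: inc_induct)
    case base
    have "ttl m (m+1) = [Rot 1]" unfolding ttl_def by simp
    then show ?case by (simp add: avail_Cons avail_Nil)
  next
    case (step l)
    have K: "0 < (2::nat)^m div 2^(l-1)" using step by (intro pos_div) simp
    have up: "[l..<m+2] = l # [Suc l..<m+2]" using step by (simp add: upt_rec)
    have rest: "avail (concat (map (ttl m) [Suc l..<m+2])) = UNIV" using step by simp
    have z: "[0..<2^m div 2^(l-1)] = 0 # [1..<2^m div 2^(l-1)]" using K by (simp add: upt_rec)
    define S where "S = foldr step (if l \<le> m then map (\<lambda>j. CX (j * 2^l + 2^(l-1) + 1) (j * 2^l + 1)) [0..<2^m div 2^l] else []) UNIV"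
    have TS: "True \<in> S" unfolding S_def by (auto intro: foldr_cx_true)
    have keep: "foldr step (map (\<lambda>j. Rot (j * 2^(l-1) + 1)) [1..<2^m div 2^(l-1)]) S = S"
      by (rule foldr_rot_keep) auto
    have "avail (concat (map (ttl m) [l..<m+2])) = foldr step (ttl m l) UNIV"
      unfolding up by (simp only: list.map concat.simps avail_append rest)
    also have "\<dots> = step (Rot 1) S"
      unfolding ttl_def z S_def[symmetric] using keep by (simp add: S_def)
    also have "\<dots> = UNIV" using TS by auto
    finally show ?case .
  qed
  show ?thesis unfolding tt_eq by (rule main) auto
qed

section \<open>Step controlled\<close>

definition scp :: "nat \<Rightarrow> nat \<Rightarrow> nat \<Rightarrow> gate list" where
  "scp n nc l = [CX (n + 1 - l) (if l \<le> n - 1 - nc then n - l else 1), Rot (if l + 1 \<le> n - nc then n - l else 1)]"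

definition scr :: "nat \<Rightarrow> nat \<Rightarrow> nat \<Rightarrow> nat" where
  "scr n nc l = (if l + 1 \<le> n - nc then n - l else 1)"

lemma sc_eq: "sc_gates n nc = map Rot [1..<n+1] @ concat (map (scp n nc) [1..<n])"
  unfolding sc_gates_def scp_def by simp

lemma rq_map_Rot': "rq (map Rot xs) = xs"
  by (induction xs) auto

lemma wfg_map_Rot': "wfg n (map Rot xs) = (\<forall>q\<in>set xs. q \<in> {1..n})"
  by (induction xs) auto

lemma foldr_rot_keep': "(\<forall>q\<in>set xs. q \<noteq> 1) \<Longrightarrow> foldr step (map Rot xs) S = S"
  by (induction xs) auto

lemma rq_scp: "rq (scp n nc l) = [scr n nc l]"
  unfolding scp_def scr_def by simp

lemma rq_sc: "rq (sc_gates n nc) = [1..<n+1] @ map (scr n nc) [1..<n]"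
proof -
  have "rq (concat (map (scp n nc) xs)) = map (scr n nc) xs" for xs
    by (induction xs) (auto simp: rq_append rq_scp)
  then show ?thesis unfolding sc_eq by (simp only: rq_append rq_map_Rot')
qed

lemma sc_len: "2 \<le> n \<Longrightarrow> length (rq (sc_gates n nc)) = 2 * n - 1"
  unfolding rq_sc by simp

lemma sc_count:
  assumes n: "2 \<le> n" and nc: "1 \<le> nc" "nc \<le> n - 1"
  shows "card {j. j < length (rq (sc_gates n nc)) \<and> rq (sc_gates n nc) ! j = 1} = nc + 1"
proof -
  have a: "length (filter (\<lambda>x. x = 1) [1..<n+1]) = 1"
  proof -
    have "[1..<n+1] = 1 # [Suc 1..<n+1]" using n by (intro upt_conv_Cons) simp
    moreover have "filter (\<lambda>x. x = 1) [Suc 1..<n+1] = []" by (auto simp: filter_empty_conv)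
    ultimately show ?thesis by simp
  qed
  have b: "length (filter (\<lambda>x. x = 1) (map (scr n nc) [1..<n])) = nc"
  proof -
    have e: "n = (n - nc) + nc" using nc n by simp
    have split: "[1..<n] = [1..<n-nc] @ [n-nc..<n]"
      using upt_add_eq_append[of 1 "n - nc" nc] nc n by (simp only: e[symmetric])
    have f1: "filter (\<lambda>x. x = 1) (map (scr n nc) [1..<n-nc]) = []"
      using nc n by (auto simp: filter_empty_conv scr_def)
    have f2: "filter (\<lambda>x. x = 1) (map (scr n nc) [n-nc..<n]) = map (scr n nc) [n-nc..<n]"
      using nc n by (auto simp: filter_id_conv scr_def)
    show ?thesis unfolding split map_append filter_append f1 f2 using nc by simp
  qed
  show ?thesis unfolding count_card unfolding rq_sc filter_append length_append a b by simp
qed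

lemma sc_wfg:
  assumes n: "2 \<le> n" and nc: "1 \<le> nc" "nc \<le> n - 1"
  shows "wfg n (sc_gates n nc)"
proof -
  have "wfg n (scp n nc l)" if "l \<in> set [1..<n]" for l
    using that nc n unfolding scp_def by auto
  then show ?thesis unfolding sc_eq wfg_append wfg_concat wfg_map_Rot' by auto
qed

lemma sc_avail:
  assumes n: "2 \<le> n" and nc: "1 \<le> nc" "nc \<le> n - 1"
  shows "avail (sc_gates n nc) = UNIV"
proof -
  have ne: "foldr step (concat (map (scp n nc) ls)) {False} \<noteq> {}" if "\<forall>l\<in>set ls. 1 \<le> l \<and> l < n" for ls
    using that
  proof (induction ls)
    case Nil then show ?case by simp
  next
    case (Cons l ls)
    define S where "S = foldr step (concat (map (scp n nc) ls)) {False}"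
    have S: "S \<noteq> {}" using Cons unfolding S_def by auto
    have l: "1 \<le> l" "l < n" using Cons.prems by auto
    have "foldr step (concat (map (scp n nc) (l # ls))) {False} = foldr step (scp n nc l) S"
      unfolding S_def by simp
    also have "\<dots> \<noteq> {}"
    proof (cases "l + 1 \<le> n - nc")
      case True
      then have "l \<le> n - 1 - nc" using nc n l by arith
      moreover have "n - l \<noteq> 1" using True nc by simp
      ultimately show ?thesis using True S unfolding scp_def by simp
    next
      case False
      then have "\<not> l \<le> n - 1 - nc" using nc n l by arith
      then show ?thesis using False S unfolding scp_def by simp
    qed
    finally show ?case .
  qed
  define S where "S = foldr step (concat (map (scp n nc) [1..<n])) {False}"
  have S: "S \<noteq> {}" unfolding S_def by (rule ne) auto
  have up: "[1..<n+1] = 1 # [Suc 1..<n+1]" using n by (intro upt_conv_Cons) simp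
  have A: "avail (sc_gates n nc) = foldr step (map Rot [1..<n+1]) (avail (concat (map (scp n nc) [1..<n])))"
    unfolding sc_eq by (rule avail_append)
  have B: "avail (concat (map (scp n nc) [1..<n])) = S" unfolding S_def avail_def ..
  have C: "foldr step (map Rot [1..<n+1]) S = step (Rot 1) (foldr step (map Rot [Suc 1..<n+1]) S)"
    unfolding up by (simp only: list.map foldr_Cons o_apply)
  have D: "foldr step (map Rot [Suc 1..<n+1]) S = S" by (rule foldr_rot_keep') auto
  have "avail (sc_gates n nc) = step (Rot 1) S" unfolding A B C D ..
  then show ?thesis using S by simp
qed

theorem theorem2:
  fixes n :: nat and \<rho> :: cmat
  assumes n2: "n \<ge> 2"
    and dens: "density_matrix n \<rho>"
  shows "(\<forall>m. n = 2^m \<longrightarrow>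
            (1 + log 2 n) / (2 * n) * alpha n \<rho> \<le> expect_params (2*n - 1) (grad_sq (2*n - 1) (f_TT m \<rho>))
          \<and> expect_params (2*n - 1) (grad_sq (2*n - 1) (f_TT m \<rho>)) \<le> 2 * n - 1)
       \<and> (\<forall>nc. 1 \<le> nc \<and> nc \<le> n - 1 \<longrightarrow>
            (1 + real nc) / 2^(1 + nc) * alpha n \<rho> \<le> expect_params (2*n - 1) (grad_sq (2*n - 1) (f_SC n nc \<rho>))
          \<and> expect_params (2*n - 1) (grad_sq (2*n - 1) (f_SC n nc \<rho>)) \<le> 2 * n - 1)"
proof -
  have n1: "1 \<le> n" using n2 by simp
  have rP: "real (2 * n - 1) = 2 * real n - 1" using n1 by (simp add: of_nat_diff)
  have TT: "(1 + log 2 n) / (2 * n) * alpha n \<rho> \<le> expect_params (2*n - 1) (grad_sq (2*n - 1) (f_TT m \<rho>))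
          \<and> expect_params (2*n - 1) (grad_sq (2*n - 1) (f_TT m \<rho>)) \<le> 2 * n - 1" if nm: "n = 2^m" for m
  proof
    have w: "wfg n (tt_gates m)" using tt_wfg[of m] nm by simp
    have hP: "2 * n - 1 = length (rq (tt_gates m))" using tt_len[of m] nm by simp
    have hL: "m + 1 = card {j. j < 2 * n - 1 \<and> rq (tt_gates m) ! j = 1}" using tt_count[of m] hP by simp
    have f: "f_TT m \<rho> = objective n (tt_gates m) \<rho>" unfolding f_TT_def nm ..
    have av: "True \<in> avail (tt_gates m)" "False \<in> avail (tt_gates m)" using tt_avail[of m] by auto
    have lb: "real (m + 1) / 2^(m+1) * alpha n \<rho> \<le> expect_params (2*n - 1) (grad_sq (2*n - 1) (f_TT m \<rho>))"
      unfolding f by (rule lower_bound[OF w hP n1 av hL])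
    have "(1 + log 2 (real n)) / (2 * real n) = real (m + 1) / 2^(m+1)"
      using nm by (simp add: log_nat_power)
    then show "(1 + log 2 n) / (2 * n) * alpha n \<rho> \<le> expect_params (2*n - 1) (grad_sq (2*n - 1) (f_TT m \<rho>))"
      using lb by simp
    have "expect_params (2*n - 1) (grad_sq (2*n - 1) (f_TT m \<rho>)) \<le> real (2 * n - 1)"
      unfolding f by (rule upper_bound[OF w hP n1 dens])
    then show "expect_params (2*n - 1) (grad_sq (2*n - 1) (f_TT m \<rho>)) \<le> 2 * n - 1"
      using rP by simp
  qed
  have SC: "(1 + real nc) / 2^(1 + nc) * alpha n \<rho> \<le> expect_params (2*n - 1) (grad_sq (2*n - 1) (f_SC n nc \<rho>))
          \<and> expect_params (2*n - 1) (grad_sq (2*n - 1) (f_SC n nc \<rho>)) \<le> 2 * n - 1"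
    if nc: "1 \<le> nc \<and> nc \<le> n - 1" for nc :: nat
  proof
    have w: "wfg n (sc_gates n nc)" using sc_wfg[OF n2] nc by simp
    have hP: "2 * n - 1 = length (rq (sc_gates n nc))" using sc_len[OF n2] by simp
    have hL: "nc + 1 = card {j. j < 2 * n - 1 \<and> rq (sc_gates n nc) ! j = 1}"
      using sc_count[OF n2] nc hP by simp
    have f: "f_SC n nc \<rho> = objective n (sc_gates n nc) \<rho>" unfolding f_SC_def ..
    have av: "True \<in> avail (sc_gates n nc)" "False \<in> avail (sc_gates n nc)" using sc_avail[OF n2] nc by auto
    have lb: "real (nc + 1) / 2^(nc+1) * alpha n \<rho> \<le> expect_params (2*n - 1) (grad_sq (2*n - 1) (f_SC n nc \<rho>))"
      unfolding f by (rule lower_bound[OF w hP n1 av hL])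
    then show "(1 + real nc) / 2^(1 + nc) * alpha n \<rho> \<le> expect_params (2*n - 1) (grad_sq (2*n - 1) (f_SC n nc \<rho>))"
      by (simp add: add.commute)
    have "expect_params (2*n - 1) (grad_sq (2*n - 1) (f_SC n nc \<rho>)) \<le> real (2 * n - 1)"
      unfolding f by (rule upper_bound[OF w hP n1 dens])
    then show "expect_params (2*n - 1) (grad_sq (2*n - 1) (f_SC n nc \<rho>)) \<le> 2 * n - 1"
      using rP by simp
  qed
  show ?thesis using TT SC by blast
qed

end
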